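(* Suppose (A1) and (V4') hold. Then there are $\alpha^0>0$ and positive constants $b,\delta$ such that for every $\alpha\in(0,\alpha^0]$ and every initial condition $\Theta_0\in\mathbb{R}^d$, $\Phi_0\in\Omega$, the solution of the QSA ODE $\frac{d}{dt}\Theta_t=\alpha f(\Theta_t,\xi_t)$ satisfies $$\|\Theta_t\|\le b\|\Theta_0\|\exp(-\alpha\delta t)\qquad\text{for } t\le T_1,\quad T_1=\min\{t\ge0:\|\Theta_t\|\le\delta^{-1}\}.$$ Consequently the family of QSA ODE models is $\alpha^0$-ultimately bounded: there is $B<\infty$ such that for every $\alpha\in(0,\alpha^0]$ and every initial condition there is a finite $t_0$ with $\|\Theta_t\|\le B$ for all $t\ge t_0$.
   Context: Setting. Fix $d,m,K\ge1$, frequencies $\omega_i>0$, phases $\phi_i$; clock process $\Phi^i_t=\exp(2\pi j[\omega_it+\phi_i])$, $\Omega$ the closure of its orbit (compact, flow invariant; any point may be the initial condition), $\pi$ the uniform probability on $\Omega$. The probing signal is $\xi_t=G(\Phi_t)$ with $G(z)=G_0((z+1/z)/2)$, $G_0\colon\mathbb{R}^K\to\mathbb{R}^m$ analytic with absolutely summable Taylor coefficients. $f\colon\mathbb{R}^d\times\mathbb{R}^m\to\mathbb{R}^d$ is continuous, $\bar f(\theta)=\int_\Omega f(\theta,G(z))\pi(dz)$, and the mean flow is $\frac{d}{dt}\vartheta_t=\bar f(\vartheta_t)$. (A1): there is $L_f$ with $\|\bar f(\theta')-\bar f(\theta)\|\le L_f\|\theta'-\theta\|$ and $\|f(\theta',\xi)-f(\theta,\xi)\|+\|f(\theta,\xi')-f(\theta,\xi)\|\le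 L_f[\|\theta'-\theta\|+\|\xi'-\xi\|]$. (V4'): there are a function $V\colon\mathbb{R}^d\to\mathbb{R}_+$ and constants $L_V<\infty$, $\delta_0>0$, $\delta_1>0$, $T>0$ such that $|V(\theta')-V(\theta)|\le L_V\|\theta'-\theta\|$ for all $\theta,\theta'$, $V(\theta)\ge\|\theta\|$ whenever $\|\theta\|\ge\delta_0^{-1}$, and every solution of the mean flow satisfies $V(\vartheta_{\tau+T})-V(\vartheta_\tau)\le-\delta_1\|\vartheta_\tau\|$ for all $\tau\ge0$ with $\|\vartheta_\tau\|>\delta_1^{-1}$. *)

theory Defs
  imports "HOL-Analysis.Analysis" "HOL-Probability.Probability"
begin

definition mono_pow :: "('k::finite \<Rightarrow> nat) \<Rightarrow> real^'k \<Rightarrow> real" where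
  "mono_pow a x = (\<Prod>i\<in>UNIV. (x$i) ^ (a i))"

definition real_analytic_at :: "(real^'k::finite \<Rightarrow> 'b::real_normed_vector) \<Rightarrow> real^'k \<Rightarrow> bool" where
  "real_analytic_at g x0 \<longleftrightarrow>
     (\<exists>c r. r > 0 \<and> (\<forall>x. dist x x0 < r \<longrightarrow> ((\<lambda>a. mono_pow a (x - x0) *\<^sub>R c a) has_sum g x) UNIV))"

definition taylor_abs_summable :: "(real^'k::finite \<Rightarrow> 'b::real_normed_vector) \<Rightarrow> bool" where
  "taylor_abs_summable g \<longleftrightarrow>
     (\<exists>c r. r > 0 \<and> (\<forall>x. norm x < r \<longrightarrow> ((\<lambda>a. mono_pow a x *\<^sub>R c a) has_sum g x) UNIV)
            \<and> (\<lambda>a. norm (c a)) summable_on UNIV)"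

definition clock_from :: "real^'k::finite \<Rightarrow> complex^'k \<Rightarrow> real \<Rightarrow> complex^'k" where
  "clock_from \<omega> z0 t = (\<chi> i. z0$i * exp (2 * pi * \<i> * complex_of_real (\<omega>$i * t)))"

definition clock :: "real^'k::finite \<Rightarrow> real^'k \<Rightarrow> real \<Rightarrow> complex^'k" where
  "clock \<omega> \<phi> t = (\<chi> i. exp (2 * pi * \<i> * complex_of_real (\<omega>$i * t + \<phi>$i)))"

definition clock_Omega :: "real^'k::finite \<Rightarrow> real^'k \<Rightarrow> (complex^'k) set" where
  "clock_Omega \<omega> \<phi> = closure (range (clock \<omega> \<phi>))"

text \<open>The closed subgroup of the torus generated by the linear flow (Omega is a translate of it).\<close>
definition clock_group :: "real^'k::finite \<Rightarrow> (complex^'k) set" where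
  "clock_group \<omega> = closure (range (clock_from \<omega> (\<chi> i. 1)))"

text \<open>pi is the uniform (translated Haar) probability on Omega: a Borel probability
  concentrated on Omega and invariant under the translations of the group acting on Omega.\<close>
definition uniform_prob :: "real^'k::finite \<Rightarrow> real^'k \<Rightarrow> (complex^'k) measure \<Rightarrow> bool" where
  "uniform_prob \<omega> \<phi> \<pi> \<longleftrightarrow>
     prob_space \<pi> \<and> sets \<pi> = sets borel \<and> emeasure \<pi> (clock_Omega \<omega> \<phi>) = 1 \<and>
     (\<forall>h\<in>clock_group \<omega>. distr \<pi> borel (\<lambda>z. \<chi> i. h$i * z$i) = \<pi>)"

text \<open>Probing signal map G(z) = G0((z + 1/z)/2) (real part taken; it is real on the torus).\<close>
definition probe :: "(real^'k::finite \<Rightarrow> real^'m) \<Rightarrow> complex^'k \<Rightarrow> real^'m" where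
  "probe G0 z = G0 (\<chi> i. Re ((z$i + inverse (z$i)) / 2))"

definition mean_field ::
  "(complex^'k::finite) measure \<Rightarrow> (real^'k \<Rightarrow> real^'m) \<Rightarrow> (real^'d \<Rightarrow> real^'m \<Rightarrow> real^'d) \<Rightarrow> real^'d \<Rightarrow> real^'d" where
  "mean_field \<pi> G0 f \<theta> = (\<integral>z. f \<theta> (probe G0 z) \<partial>\<pi>)"

definition qsa_solution ::
  "real^'k::finite \<Rightarrow> (real^'k \<Rightarrow> real^'m) \<Rightarrow> (real^'d \<Rightarrow> real^'m \<Rightarrow> real^'d) \<Rightarrow> real
     \<Rightarrow> real^'d \<Rightarrow> complex^'k \<Rightarrow> (real \<Rightarrow> real^'d) \<Rightarrow> bool" where
  "qsa_solution \<omega> G0 f \<alpha> \<Theta>0 z0 \<Theta> \<longleftrightarrow>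
     \<Theta> 0 = \<Theta>0 \<and>
     (\<forall>t\<ge>0. (\<Theta> has_vector_derivative (\<alpha> *\<^sub>R f (\<Theta> t) (probe G0 (clock_from \<omega> z0 t)))) (at t within {0..}))"

definition mean_flow_solution :: "(real^'d \<Rightarrow> real^'d) \<Rightarrow> (real \<Rightarrow> real^'d) \<Rightarrow> bool" where
  "mean_flow_solution fbar \<theta>s \<longleftrightarrow>
     (\<forall>t\<ge>0. (\<theta>s has_vector_derivative fbar (\<theta>s t)) (at t within {0..}))"

end

theory Submission
  imports Defs
begin
lemma deriv_approx:
  fixes e :: "real \<Rightarrow> 'a::real_normed_vector"
  assumes "(e has_vector_derivative e') (at t within S)" "\<epsilon> > 0"
  shows "\<exists>d>0. \<forall>s\<in>S. dist s t < d \<longrightarrow> norm (e s - e t - (s - t) *\<^sub>R e') \<le> \<epsilon> * \<bar>s - t\<bar>"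
proof -
  have "((\<lambda>y. norm (e y - e t - (y - t) *\<^sub>R e') / norm (y - t)) \<longlongrightarrow> 0) (at t within S)"
    using assms(1) unfolding has_vector_derivative_def has_derivative_iff_norm by auto
  then have "\<forall>\<^sub>F y in at t within S. dist (norm (e y - e t - (y - t) *\<^sub>R e') / norm (y - t)) 0 < \<epsilon>"
    by (rule tendstoD[OF _ assms(2)])
  then obtain d where d: "d > 0" "\<forall>y\<in>S. y \<noteq> t \<and> dist y t < d \<longrightarrow>
      dist (norm (e y - e t - (y - t) *\<^sub>R e') / norm (y - t)) 0 < \<epsilon>"
    unfolding eventually_at by (elim exE conjE) (rule that)
  show ?thesis
  proof (intro exI[of _ d] conjI ballI impI)
    fix s assume s: "s \<in> S" "dist s t < d"
    show "norm (e s - e t - (s - t) *\<^sub>R e') \<le> \<epsilon> * \<bar>s - t\<bar>"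
    proof (cases "s = t")
      case True then show ?thesis by simp
    next
      case False
      then have pos: "\<bar>s - t\<bar> > 0" by simp
      have "norm (e s - e t - (s - t) *\<^sub>R e') / \<bar>s - t\<bar> < \<epsilon>"
        using d(2) s False by (simp add: dist_real_def)
      then have "norm (e s - e t - (s - t) *\<^sub>R e') < \<epsilon> * \<bar>s - t\<bar>"
        using pos by (simp add: divide_less_eq)
      then show ?thesis by linarith
    qed
  qed (rule d(1))
qed

lemma cont_neg_nbhd:
  fixes h :: "real \<Rightarrow> real"
  assumes "continuous_on S h" "t \<in> S" "h t < 0"
  shows "\<exists>d>0. \<forall>s\<in>S. dist s t < d \<longrightarrow> h s < 0"
proof -
  obtain d where d: "d > 0" "\<forall>s\<in>S. dist s t < d \<longrightarrow> dist (h s) (h t) < - h t"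
    using assms unfolding continuous_on_iff by (meson neg_0_less_iff_less)
  have "\<forall>s\<in>S. dist s t < d \<longrightarrow> h s < 0"
  proof (intro ballI impI)
    fix s assume "s \<in> S" "dist s t < d"
    then have "dist (h s) (h t) < - h t" using d by blast
    then show "h s < 0" by (simp add: dist_real_def abs_less_iff)
  qed
  then show ?thesis using d(1) by blast
qed

lemma compare_first_crossing:
  fixes e :: "real \<Rightarrow> 'a::real_normed_vector" and g :: "real \<Rightarrow> real"
  assumes de: "\<And>s. s \<in> {0..S} \<Longrightarrow> (e has_vector_derivative e' s) (at s within {0..S})"
    and dg: "\<And>s. s \<in> {0..S} \<Longrightarrow> (g has_vector_derivative g' s) (at s within {0..S})"
    and init: "norm (e 0) < g 0"
    and step: "\<And>s. s \<in> {0..S} \<Longrightarrow> norm (e s) = g s \<Longrightarrow> norm (e' s) < g' s"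
    and x: "x \<in> {0..S}"
  shows "norm (e x) < g x"
proof (rule ccontr)
  assume nx: "\<not> norm (e x) < g x"
  define h where "h s = norm (e s) - g s" for s
  define A where "A = {s \<in> {0..S}. 0 \<le> h s}"
  have xA: "x \<in> A" using nx x by (auto simp: A_def h_def)
  have contE: "continuous_on {0..S} e"
    using de by (meson continuous_on_eq_continuous_within has_vector_derivative_continuous)
  have contG: "continuous_on {0..S} g"
    using dg by (meson continuous_on_eq_continuous_within has_vector_derivative_continuous)
  have contH: "continuous_on {0..S} h"
    unfolding h_def by (intro continuous_intros contE contG)
  define t where "t = Inf A"
  have bdd: "bdd_below A" by (auto simp: A_def bdd_below_def)
  have t_le: "t \<le> a" if "a \<in> A" for a using that bdd by (simp add: t_def cInf_lower)
  have t0: "0 \<le> t" using xA by (auto simp: t_def A_def intro!: cInf_greatest)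
  have tS: "t \<le> S" using t_le[OF xA] x by auto
  have tS0: "t \<in> {0..S}" using t0 tS by simp
  have below: "h s < 0" if "s \<in> {0..S}" "s < t" for s
    using that t_le by (force simp: A_def)
  have h0: "h 0 < 0" using init by (simp add: h_def)
  have ht_ge: "0 \<le> h t"
  proof (rule ccontr)
    assume "\<not> 0 \<le> h t"
    then have "h t < 0" by simp
    obtain d where d: "d > 0" "\<forall>s\<in>{0..S}. dist s t < d \<longrightarrow> h s < 0"
      using cont_neg_nbhd[OF contH tS0 \<open>h t < 0\<close>] by blast
    have "\<exists>a\<in>A. a < t + d"
    proof -
      have "A \<noteq> {}" using xA by blast
      moreover have "Inf A < t + d" using d(1) by (simp add: t_def)
      ultimately show ?thesis using cInf_less_iff[OF _ bdd] by blast
    qed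
    then obtain a where a: "a \<in> A" "a < t + d" by blast
    then have "dist a t < d" using t_le[OF a(1)] by (simp add: dist_real_def)
    then have "h a < 0" using a d(2) by (simp add: A_def)
    then show False using a by (auto simp: A_def)
  qed
  have tpos: "0 < t"
    using ht_ge h0 t0 by (metis order_le_less not_less)
  have ht_le: "h t \<le> 0"
  proof (rule ccontr)
    assume "\<not> h t \<le> 0"
    then have "h t > 0" by simp
    have contH': "continuous_on {0..S} (\<lambda>s. - h s)" using contH by (intro continuous_intros)
    have "- h t < 0" using \<open>h t > 0\<close> by simp
    from cont_neg_nbhd[OF contH' tS0 this] obtain d where
      d: "d > 0" "\<forall>s\<in>{0..S}. dist s t < d \<longrightarrow> h s > 0"
      by auto
    define s where "s = t - min d t / 2"
    have "s \<in> {0..S}" "s < t" "dist s t < d" using tpos d(1) tS by (auto simp: s_def dist_real_def)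
    then show False using d(2) below by (meson less_asym)
  qed
  have tS': "t \<in> {0..S}" using t0 tS by auto
  have eq: "norm (e t) = g t" using ht_ge ht_le by (simp add: h_def)
  define \<eta> where "\<eta> = (g' t - norm (e' t)) / 3"
  have eta: "\<eta> > 0" using step[OF tS' eq] by (simp add: \<eta>_def)
  obtain d1 where d1: "d1 > 0" "\<And>s. s \<in> {0..S} \<Longrightarrow> dist s t < d1 \<Longrightarrow>
      norm (e s - e t - (s - t) *\<^sub>R e' t) \<le> \<eta> * \<bar>s - t\<bar>"
    using deriv_approx[OF de[OF tS'] eta] by blast
  obtain d2 where d2: "d2 > 0" "\<And>s. s \<in> {0..S} \<Longrightarrow> dist s t < d2 \<Longrightarrow>
      norm (g s - g t - (s - t) *\<^sub>R g' t) \<le> \<eta> * \<bar>s - t\<bar>"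
    using deriv_approx[OF dg[OF tS'] eta] by blast
  define s where "s = t - min (min d1 d2) t / 2"
  have s: "s \<in> {0..S}" "s < t" "dist s t < d1" "dist s t < d2"
    using tpos d1(1) d2(1) tS by (auto simp: s_def dist_real_def)
  have e1: "norm (e s - e t - (s - t) *\<^sub>R e' t) \<le> \<eta> * (t - s)" using d1(2)[OF s(1) s(3)] s(2) by simp
  have g1: "\<bar>g s - g t - (s - t) * g' t\<bar> \<le> \<eta> * (t - s)" using d2(2)[OF s(1) s(4)] s(2) by simp
  have "norm (e t - e s) \<le> norm ((s - t) *\<^sub>R e' t) + norm (e s - e t - (s - t) *\<^sub>R e' t)"
    by (metis norm_minus_commute norm_triangle_sub add.commute)
  also have "\<dots> \<le> (t - s) * norm (e' t) + \<eta> * (t - s)" using e1 s(2) by simp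
  finally have n1: "norm (e t - e s) \<le> (t - s) * norm (e' t) + \<eta> * (t - s)" .
  have "norm (e t) \<le> norm (e s) + norm (e t - e s)" by (metis norm_triangle_sub)
  then have "h s \<ge> g t - g s - norm (e t - e s)" using eq by (simp add: h_def)
  moreover have "g t - g s \<ge> (t - s) * g' t - \<eta> * (t - s)" using g1 by (simp add: algebra_simps abs_le_iff)
  ultimately have "h s \<ge> (t - s) * (g' t - norm (e' t) - 2 * \<eta>)" using n1 by (simp add: algebra_simps)
  moreover have "(t - s) * (g' t - norm (e' t) - 2 * \<eta>) > 0" using s(2) eta by (simp add: \<eta>_def)
  ultimately have "h s > 0" by linarith
  then show False using below[OF s(1) s(2)] by linarith
qed

primrec picard :: "('a::banach \<Rightarrow> 'a) \<Rightarrow> 'a \<Rightarrow> nat \<Rightarrow> real \<Rightarrow> 'a" where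
  "picard F x0 0 = (\<lambda>t. x0)"
| "picard F x0 (Suc n) = (\<lambda>t. x0 + integral {0..t} (\<lambda>s. F (picard F x0 n s)))"

lemma picard_cont:
  fixes F :: "'a::banach \<Rightarrow> 'a"
  assumes cF: "continuous_on UNIV F"
  shows "continuous_on {0..b} (picard F x0 n)"
proof (induction n arbitrary: b)
  case 0 then show ?case by simp
next
  case (Suc n)
  have "continuous_on {0..b} (\<lambda>s. F (picard F x0 n s))"
    using continuous_on_compose2[OF cF Suc.IH] by simp
  then have "(\<lambda>s. F (picard F x0 n s)) integrable_on {0..b}"
    by (rule integrable_continuous_real)
  then have "continuous_on {0..b} (\<lambda>t. integral {0..t} (\<lambda>s. F (picard F x0 n s)))"
    by (rule indefinite_integral_continuous_1)
  then show ?case by (simp add: continuous_on_add)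
qed

lemma picard_int:
  fixes F :: "'a::banach \<Rightarrow> 'a"
  assumes cF: "continuous_on UNIV F"
  shows "(\<lambda>s. F (picard F x0 n s)) integrable_on {0..b}"
proof -
  have "continuous_on {0..b} (\<lambda>s. F (picard F x0 n s))"
    using continuous_on_compose2[OF cF picard_cont[OF cF]] by simp
  then show ?thesis by (rule integrable_continuous_real)
qed

lemma integral_power_0:
  fixes t :: real assumes "t \<ge> 0"
  shows "((\<lambda>s. c * s ^ k) has_integral (c * t ^ Suc k / Suc k)) {0..t}"
proof -
  have "((\<lambda>s. c * s ^ k) has_integral ((\<lambda>s. c * s ^ Suc k / Suc k) t - (\<lambda>s. c * s ^ Suc k / Suc k) 0)) {0..t}"
  proof (rule fundamental_theorem_of_calculus[OF assms])
    fix x :: real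
    have "((\<lambda>s. c * s ^ Suc k / Suc k) has_real_derivative c * (real (Suc k) * x ^ k) / Suc k) (at x within {0..t})"
      by (intro derivative_eq_intros) auto
    then show "((\<lambda>s. c * s ^ Suc k / Suc k) has_vector_derivative c * x ^ k) (at x within {0..t})"
      by (simp add: has_real_derivative_iff_has_vector_derivative[symmetric])
  qed
  then show ?thesis by simp
qed

lemma picard_bound:
  fixes F :: "'a::banach \<Rightarrow> 'a"
  assumes cF: "continuous_on UNIV F"
    and lip: "\<And>x y. norm (F x - F y) \<le> L * norm (x - y)" and L: "L \<ge> 0"
  shows "t \<ge> 0 \<Longrightarrow> norm (picard F x0 (Suc n) t - picard F x0 n t) \<le> norm (F x0) * L ^ n * t ^ Suc n / fact (Suc n)"
proof (induction n arbitrary: t)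
  case 0
  then show ?case by simp
next
  case (Suc n)
  let ?M = "norm (F x0)"
  let ?P = "picard F x0"
  have "?P (Suc (Suc n)) t - ?P (Suc n) t = integral {0..t} (\<lambda>s. F (?P (Suc n) s)) - integral {0..t} (\<lambda>s. F (?P n s))"
    by simp
  also have "\<dots> = integral {0..t} (\<lambda>s. F (?P (Suc n) s) - F (?P n s))"
    by (rule integral_diff[symmetric]; rule picard_int[OF cF])
  finally have eq: "?P (Suc (Suc n)) t - ?P (Suc n) t = integral {0..t} (\<lambda>s. F (?P (Suc n) s) - F (?P n s))" .
  have hi: "((\<lambda>s. (L * (?M * L ^ n / fact (Suc n))) * s ^ Suc n) has_integral
      ((L * (?M * L ^ n / fact (Suc n))) * t ^ Suc (Suc n) / Suc (Suc n))) {0..t}"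
    by (rule integral_power_0) (use Suc.prems in simp)
  have "norm (integral {0..t} (\<lambda>s. F (?P (Suc n) s) - F (?P n s)))
      \<le> integral {0..t} (\<lambda>s. (L * (?M * L ^ n / fact (Suc n))) * s ^ Suc n)"
  proof (rule integral_norm_bound_integral)
    show "(\<lambda>s. F (?P (Suc n) s) - F (?P n s)) integrable_on {0..t}"
      by (intro integrable_diff picard_int[OF cF])
    show "(\<lambda>s. (L * (?M * L ^ n / fact (Suc n))) * s ^ Suc n) integrable_on {0..t}"
      using hi by blast
    fix s assume s: "s \<in> {0..t}"
    have "norm (F (?P (Suc n) s) - F (?P n s)) \<le> L * norm (?P (Suc n) s - ?P n s)" by (rule lip)
    also have "\<dots> \<le> L * (?M * L ^ n * s ^ Suc n / fact (Suc n))"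
      using Suc.IH[of s] s L by (intro mult_left_mono) auto
    finally show "norm (F (?P (Suc n) s) - F (?P n s)) \<le> (L * (?M * L ^ n / fact (Suc n))) * s ^ Suc n"
      by simp
  qed
  also have "\<dots> = (L * (?M * L ^ n / fact (Suc n))) * t ^ Suc (Suc n) / Suc (Suc n)"
    using hi by (rule integral_unique)
  also have "\<dots> = ?M * L ^ Suc n * t ^ Suc (Suc n) / fact (Suc (Suc n))"
    by (simp add: field_simps)
  finally show ?case using eq by simp
qed

lemma picard_uniform:
  fixes F :: "'a::banach \<Rightarrow> 'a" and x0 :: 'a
  assumes cF: "continuous_on UNIV F"
    and lip: "\<And>x y. norm (F x - F y) \<le> L * norm (x - y)" and L: "L \<ge> 0"
  defines "y \<equiv> \<lambda>x. x0 + (\<Sum>i. picard F x0 (Suc i) x - picard F x0 i x)"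
  assumes b: "b \<ge> 0"
  shows "uniform_limit {0..b} (picard F x0) y sequentially"
proof -
  let ?P = "picard F x0"
  let ?M = "norm (F x0)"
  define Mb where "Mb i = ?M * b * (inverse (fact i) * (L * b) ^ i)" for i
  have bnd: "norm (?P (Suc i) x - ?P i x) \<le> Mb i" if x: "x \<in> {0..b}" for i x
  proof -
    have "norm (?P (Suc i) x - ?P i x) \<le> ?M * L ^ i * x ^ Suc i / fact (Suc i)"
      using picard_bound[OF cF lip L] x by auto
    also have "\<dots> \<le> ?M * L ^ i * b ^ Suc i / fact i"
    proof -
      have "x ^ Suc i \<le> b ^ Suc i" using x by (intro power_mono) auto
      then have "?M * L ^ i * x ^ Suc i \<le> ?M * L ^ i * b ^ Suc i"
        using L by (intro mult_left_mono) auto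
      moreover have "(fact i :: real) \<le> fact (Suc i)" by (rule fact_mono) simp
      moreover have "0 \<le> ?M * L ^ i * b ^ Suc i" using L b by simp
      moreover have "(0::real) < fact i" by simp
      ultimately show ?thesis
        by (meson divide_mono less_le_trans order_trans frac_le)
    qed
    also have "\<dots> = Mb i" by (simp add: Mb_def power_mult_distrib field_simps)
    finally show ?thesis .
  qed
  have sM: "summable Mb" unfolding Mb_def by (intro summable_mult summable_exp)
  have ul: "uniform_limit {0..b} (\<lambda>n x. \<Sum>i<n. ?P (Suc i) x - ?P i x)
      (\<lambda>x. \<Sum>i. ?P (Suc i) x - ?P i x) sequentially"
    by (rule Weierstrass_m_test[OF bnd sM])
  have "uniform_limit {0..b} (\<lambda>n x. x0 + (\<Sum>i<n. ?P (Suc i) x - ?P i x)) y sequentially"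
    unfolding y_def by (intro uniform_limit_add uniform_limit_const ul)
  moreover have "(\<lambda>n x. x0 + (\<Sum>i<n. ?P (Suc i) x - ?P i x)) = ?P"
  proof (intro ext)
    fix n x
    have "(\<Sum>i<n. ?P (Suc i) x - ?P i x) = ?P n x - ?P 0 x" by (rule sum_lessThan_telescope)
    then show "x0 + (\<Sum>i<n. ?P (Suc i) x - ?P i x) = ?P n x" by (simp del: picard.simps(2))
  qed
  ultimately show ?thesis by simp
qed

lemma ode_exists:
  fixes F :: "'a::banach \<Rightarrow> 'a"
  assumes lip: "\<And>x y. norm (F x - F y) \<le> L * norm (x - y)" and L: "L \<ge> 0"
  shows "\<exists>y. y 0 = x0 \<and> (\<forall>t\<ge>0. (y has_vector_derivative F (y t)) (at t within {0..}))"
proof -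
  have "L-lipschitz_on UNIV F" unfolding lipschitz_on_def using lip L by (simp add: dist_norm)
  then have cF: "continuous_on UNIV F" by (rule lipschitz_on_continuous_on)
  let ?P = "picard F x0"
  define y where "y \<equiv> \<lambda>x. x0 + (\<Sum>i. picard F x0 (Suc i) x - picard F x0 i x)"
  have ul: "uniform_limit {0..b} ?P y sequentially" if "b \<ge> 0" for b
    using picard_uniform[OF cF lip L that] unfolding y_def by simp
  have cy: "continuous_on {0..b} y" if "b \<ge> 0" for b
    by (rule uniform_limit_theorem[OF _ ul[OF that]]) (auto intro: always_eventually picard_cont[OF cF])
  have cFy: "continuous_on {0..b} (\<lambda>s. F (y s))" if "b \<ge> 0" for b
    using continuous_on_compose2[OF cF cy[OF that]] by simp
  have ulF: "uniform_limit {0..b} (\<lambda>n s. F (?P n s)) (\<lambda>s. F (y s)) sequentially" if "b \<ge> 0" for b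
  proof (rule uniform_limitI)
    fix e :: real assume e: "e > 0"
    have "e / (L + 1) > 0" using e L by simp
    from uniform_limitD[OF ul[OF that] this]
    show "\<forall>\<^sub>F n in sequentially. \<forall>x\<in>{0..b}. dist (F (?P n x)) (F (y x)) < e"
    proof (rule eventually_mono)
      fix n assume h: "\<forall>x\<in>{0..b}. dist (?P n x) (y x) < e / (L + 1)"
      show "\<forall>x\<in>{0..b}. dist (F (?P n x)) (F (y x)) < e"
      proof
        fix x assume x: "x \<in> {0..b}"
        have dd: "dist (F (?P n x)) (F (y x)) \<le> L * dist (?P n x) (y x)"
          using lip by (simp add: dist_norm)
        have "dist (?P n x) (y x) \<le> e / (L + 1)" using h x by (simp add: less_imp_le)
        then have "L * dist (?P n x) (y x) \<le> L * (e / (L + 1))" using L by (rule mult_left_mono)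
        also have "\<dots> < e" using e L by (simp add: field_simps)
        finally have "L * dist (?P n x) (y x) < e" .
        then show "dist (F (?P n x)) (F (y x)) < e" using dd by linarith
      qed
    qed
  qed
  have inteq: "y t = x0 + integral {0..t} (\<lambda>s. F (y s))" if t: "t \<ge> 0" for t
  proof -
    obtain I J where I: "\<And>n. ((\<lambda>s. F (?P n s)) has_integral I n) {0..t}"
      and J: "((\<lambda>s. F (y s)) has_integral J) {0..t}" and lim: "I \<longlonglongrightarrow> J"
    proof -
      have c: "\<And>n. continuous_on {0..t} (\<lambda>s. F (?P n s))"
        by (rule continuous_on_compose2[OF cF picard_cont[OF cF]]) simp
      show ?thesis by (rule uniform_limit_integral[OF ulF[OF t] c trivial_limit_sequentially]) (rule that; assumption)+
    qed
    have "(\<lambda>n. ?P (Suc n) t) = (\<lambda>n. x0 + I n)"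
      using I by (auto intro!: ext integral_unique)
    moreover have "(\<lambda>n. x0 + I n) \<longlonglongrightarrow> x0 + J" by (intro tendsto_intros lim)
    ultimately have l1: "(\<lambda>n. ?P (Suc n) t) \<longlonglongrightarrow> x0 + J" by simp
    have "(\<lambda>n. ?P n t) \<longlonglongrightarrow> y t"
      using tendsto_uniform_limitI[OF ul[OF t], of t] t by simp
    then have "(\<lambda>n. ?P (Suc n) t) \<longlonglongrightarrow> y t" by (rule LIMSEQ_Suc)
    with l1 have "y t = x0 + J" using LIMSEQ_unique by blast
    then show ?thesis using J by (simp add: integral_unique)
  qed
  have y0: "y 0 = x0" using inteq[of 0] by simp
  have der: "(y has_vector_derivative F (y t)) (at t within {0..})" if t: "t \<ge> 0" for t
  proof -
    have tb: "t \<in> {0..t+1}" using t by simp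
    have d1: "((\<lambda>u. integral {0..u} (\<lambda>s. F (y s))) has_vector_derivative F (y t)) (at t within {0..t+1})"
      by (rule integral_has_vector_derivative[OF cFy tb]) (use t in simp)
    have d2: "((\<lambda>u. x0 + integral {0..u} (\<lambda>s. F (y s))) has_vector_derivative F (y t)) (at t within {0..t+1})"
      using has_vector_derivative_add[OF has_vector_derivative_const d1] by simp
    have d3: "(y has_vector_derivative F (y t)) (at t within {0..t+1})"
      by (rule has_vector_derivative_transform_within[OF d2 zero_less_one tb]) (auto simp: inteq)
    have "at t within {0..t+1} = at t within {0..}"
      by (rule at_within_nhd[of _ "{..<t+1}"]) auto
    then show ?thesis using d3 by simp
  qed
  show ?thesis using y0 der by blast
qed

lemma summable_on_finite_sum:
  fixes f :: "'i \<Rightarrow> 'a \<Rightarrow> real"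
  assumes "finite I" "\<And>i. i \<in> I \<Longrightarrow> f i summable_on A"
  shows "(\<lambda>x. \<Sum>i\<in>I. f i x) summable_on A"
  using assms
proof (induction I rule: finite_induct)
  case empty then show ?case by simp
next
  case (insert j I)
  have "(\<lambda>x. f j x + (\<Sum>i\<in>I. f i x)) summable_on A"
    using insert by (intro summable_on_add) auto
  then show ?case using insert by simp
qed

lemma mono_pow_bound:
  fixes x :: "real^'k::finite"
  assumes s: "norm x \<le> s"
  shows "\<bar>mono_pow a x\<bar> \<le> s ^ (\<Sum>i\<in>UNIV. a i)"
proof -
  have "\<bar>mono_pow a x\<bar> = (\<Prod>i\<in>UNIV. \<bar>x$i\<bar> ^ a i)"
    by (simp add: mono_pow_def abs_prod power_abs)
  also have "\<dots> \<le> (\<Prod>i\<in>UNIV. s ^ a i)"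
  proof (rule prod_mono)
    fix i :: 'k
    have "\<bar>x$i\<bar> \<le> s" using component_le_norm_cart[of x i] s by linarith
    then show "0 \<le> \<bar>x$i\<bar> ^ a i \<and> \<bar>x$i\<bar> ^ a i \<le> s ^ a i"
      by (simp add: power_mono)
  qed
  also have "\<dots> = s ^ (\<Sum>i\<in>UNIV. a i)" by (simp add: power_sum)
  finally show ?thesis .
qed

lemma mono_pow_const:
  "mono_pow a (\<chi> i. (\<rho>::real)) = \<rho> ^ (\<Sum>i\<in>UNIV. a i)"
  by (simp add: mono_pow_def power_sum)

lemma mono_pow_zero:
  "mono_pow a (0::real^'k::finite) = (if (\<Sum>i\<in>UNIV. a i) = 0 then 1 else 0)"
proof (cases "(\<Sum>i\<in>UNIV. a i) = 0")
  case True
  then have "\<forall>i. a i = 0" by simp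
  then show ?thesis using True by (simp add: mono_pow_def)
next
  case False
  then obtain j where "a j \<noteq> 0" by (metis (mono_tags, lifting) sum.neutral)
  then have "(0::real) ^ a j = 0" by simp
  then have "(\<Prod>i\<in>UNIV. (0::real) ^ a i) = 0"
    by (intro prod_zero) auto
  then show ?thesis using False by (simp add: mono_pow_def)
qed

lemma analytic_continuous_at:
  fixes g :: "real^'k::finite \<Rightarrow> real^'m::finite"
  assumes "real_analytic_at g x0"
  shows "continuous (at x0) g"
proof -
  obtain c r where r: "r > 0" and hs: "\<And>x. dist x x0 < r \<Longrightarrow> ((\<lambda>a. mono_pow a (x - x0) *\<^sub>R c a) has_sum g x) UNIV"
    using assms unfolding real_analytic_at_def by blast
  define \<rho> where "\<rho> = r / (2 * real CARD('k))"
  have rho: "\<rho> > 0" using r by (simp add: \<rho>_def)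
  have rho_r: "\<rho> < r"
  proof -
    have c1: "real CARD('k) \<ge> 1" by (simp add: Suc_leI)
    have "\<rho> \<le> r / 2" unfolding \<rho>_def using r c1 by (simp add: field_simps)
    then show ?thesis using r by simp
  qed
  define y where "y = x0 + (\<chi> i. \<rho>)"
  have "norm (\<chi> i::'k. \<rho>) \<le> (\<Sum>i\<in>UNIV. \<bar>(\<chi> i::'k. \<rho>)$i\<bar>)" by (rule norm_le_l1_cart)
  also have "\<dots> = real CARD('k) * \<rho>" using rho by simp
  also have "\<dots> = r / 2" by (simp add: \<rho>_def)
  finally have "dist y x0 < r" using r by (simp add: y_def dist_norm)
  from hs[OF this] have hy: "((\<lambda>a. \<rho> ^ (\<Sum>i\<in>UNIV. a i) *\<^sub>R c a) has_sum g y) UNIV"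
    by (simp add: y_def mono_pow_const)
  define K where "K a = \<rho> ^ (\<Sum>i\<in>UNIV. a i) * norm (c a)" for a :: "'k \<Rightarrow> nat"
  have Ksum: "K summable_on UNIV"
  proof -
    have comp: "(\<lambda>a. \<bar>\<rho> ^ (\<Sum>i\<in>UNIV. a i) * c a $ j\<bar>) summable_on UNIV" for j :: 'm
    proof -
      have "(\<lambda>a. (\<rho> ^ (\<Sum>i\<in>UNIV. a i) *\<^sub>R c a) $ j) summable_on UNIV"
        using summable_on_bounded_linear[OF bounded_linear_vec_nth has_sum_imp_summable[OF hy]] .
      then have "(\<lambda>a. \<rho> ^ (\<Sum>i\<in>UNIV. a i) * c a $ j) summable_on UNIV" by simp
      then show ?thesis using summable_on_iff_abs_summable_on_real[THEN iffD1] by (simp add: real_norm_def)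
    qed
    have "(\<lambda>a. \<Sum>j\<in>UNIV. \<bar>\<rho> ^ (\<Sum>i\<in>UNIV. a i) * c a $ j\<bar>) summable_on UNIV"
      by (rule summable_on_finite_sum) (use comp in auto)
    then show ?thesis
    proof (rule summable_on_comparison_test)
      fix a :: "'k \<Rightarrow> nat"
      show "0 \<le> K a" using rho by (simp add: K_def)
      have "norm (c a) \<le> (\<Sum>j\<in>UNIV. \<bar>c a $ j\<bar>)" by (rule norm_le_l1_cart)
      then have "K a \<le> \<rho> ^ (\<Sum>i\<in>UNIV. a i) * (\<Sum>j\<in>UNIV. \<bar>c a $ j\<bar>)"
        unfolding K_def using rho by (intro mult_left_mono) auto
      also have "\<dots> = (\<Sum>j\<in>UNIV. \<bar>\<rho> ^ (\<Sum>i\<in>UNIV. a i) * c a $ j\<bar>)"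
        using rho by (simp add: sum_distrib_left abs_mult)
      finally show "K a \<le> (\<Sum>j\<in>UNIV. \<bar>\<rho> ^ (\<Sum>i\<in>UNIV. a i) * c a $ j\<bar>)" .
    qed
  qed
  define KS where "KS = infsum K UNIV"
  have KS0: "KS \<ge> 0" unfolding KS_def by (rule infsum_nonneg) (use rho in \<open>simp add: K_def\<close>)
  have main: "norm (g x - g x0) \<le> (s / \<rho>) * KS" if s: "norm (x - x0) \<le> s" "s \<le> \<rho>" for x s
  proof -
    have s0: "0 \<le> s" using s(1) norm_ge_zero order_trans by blast
    have "dist x x0 < r" using s rho_r by (simp add: dist_norm)
    note h1 = hs[OF this]
    have h0: "((\<lambda>a. mono_pow a (x0 - x0) *\<^sub>R c a) has_sum g x0) UNIV" using hs[of x0] r by simp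
    have hd: "((\<lambda>a. (mono_pow a (x - x0) - mono_pow a 0) *\<^sub>R c a) has_sum (g x - g x0)) UNIV"
    proof -
      have "((\<lambda>a. - (mono_pow a (x0 - x0) *\<^sub>R c a)) has_sum (- g x0)) UNIV"
        using h0 by (simp add: has_sum_uminus)
      from has_sum_add[OF h1 this] show ?thesis by (simp add: algebra_simps)
    qed
    have bnd: "norm ((mono_pow a (x - x0) - mono_pow a 0) *\<^sub>R c a) \<le> (s / \<rho>) * K a" for a
    proof (cases "(\<Sum>i\<in>UNIV. a i) = 0")
      case True
      then have "\<forall>i. a i = 0" by simp
      then have "mono_pow a (x - x0) = 1" by (simp add: mono_pow_def)
      then show ?thesis using True rho s0 by (simp add: mono_pow_zero K_def)
    next
      case False
      define n where "n = (\<Sum>i\<in>UNIV. a i)"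
      have n1: "n \<ge> 1" using False unfolding n_def by linarith
      have "\<bar>mono_pow a (x - x0)\<bar> \<le> s ^ n" unfolding n_def by (rule mono_pow_bound[OF s(1)])
      also have "s ^ n = s * s ^ (n - 1)" using n1 by (cases n) auto
      also have "\<dots> \<le> s * \<rho> ^ (n - 1)" using s s0 by (intro mult_left_mono power_mono) auto
      also have "\<dots> = (s / \<rho>) * \<rho> ^ n"
      proof -
        have "\<rho> ^ n = \<rho> * \<rho> ^ (n - 1)" using n1 by (cases n) auto
        then show ?thesis using rho by simp
      qed
      finally have "\<bar>mono_pow a (x - x0)\<bar> \<le> (s / \<rho>) * \<rho> ^ n" .
      then have "\<bar>mono_pow a (x - x0)\<bar> * norm (c a) \<le> ((s / \<rho>) * \<rho> ^ n) * norm (c a)"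
        by (rule mult_right_mono) simp
      moreover have "mono_pow a (0::real^'k) = 0" using False by (simp add: mono_pow_zero)
      ultimately show ?thesis by (simp add: K_def n_def mult.assoc)
    qed
    have Ks2: "(\<lambda>a. (s / \<rho>) * K a) summable_on UNIV" by (rule summable_on_cmult_right[OF Ksum])
    have abs: "(\<lambda>a. norm ((mono_pow a (x - x0) - mono_pow a 0) *\<^sub>R c a)) summable_on UNIV"
      apply (rule summable_on_comparison_test[OF Ks2])
       apply (rule bnd)
      apply (rule norm_ge_zero)
      done
    have "norm (g x - g x0) = norm (infsum (\<lambda>a. (mono_pow a (x - x0) - mono_pow a 0) *\<^sub>R c a) UNIV)"
      using hd by (simp add: has_sum_iff)
    also have "\<dots> \<le> infsum (\<lambda>a. norm ((mono_pow a (x - x0) - mono_pow a 0) *\<^sub>R c a)) UNIV"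
      by (rule norm_infsum_bound[OF abs])
    also have "\<dots> \<le> infsum (\<lambda>a. (s / \<rho>) * K a) UNIV"
      by (rule infsum_mono[OF abs Ks2 bnd])
    also have "\<dots> = (s / \<rho>) * KS" unfolding KS_def by (rule infsum_cmult_right) (use Ksum in auto)
    finally show ?thesis .
  qed
  show ?thesis
    unfolding continuous_at_eps_delta
  proof (intro allI impI)
    fix e :: real assume e: "e > 0"
    define d where "d = min \<rho> (e * \<rho> / (KS + 1))"
    have d: "d > 0" using e rho KS0 by (simp add: d_def)
    have "\<forall>x'. dist x' x0 < d \<longrightarrow> dist (g x') (g x0) < e"
    proof (intro allI impI)
      fix x' assume "dist x' x0 < d"
      then have h: "norm (x' - x0) \<le> d" "d \<le> \<rho>" by (auto simp: dist_norm d_def)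
      have "dist (g x') (g x0) \<le> (d / \<rho>) * KS" using main[OF h] by (simp add: dist_norm)
      also have "\<dots> \<le> (e / (KS + 1)) * KS"
      proof (rule mult_right_mono[OF _ KS0])
        have "d \<le> e * \<rho> / (KS + 1)" by (simp add: d_def)
        then have "d / \<rho> \<le> (e * \<rho> / (KS + 1)) / \<rho>" using rho by (intro divide_right_mono) auto
        also have "\<dots> = e / (KS + 1)" using rho by simp
        finally show "d / \<rho> \<le> e / (KS + 1)" .
      qed
      also have "\<dots> < e" using e KS0 by (simp add: field_simps)
      finally show "dist (g x') (g x0) < e" .
    qed
    then show "\<exists>d>0. \<forall>x'. dist x' x0 < d \<longrightarrow> dist (g x') (g x0) < e" using d by blast
  qed
qed

lemma probe_measurable:
  fixes G0 :: "real^'k::finite \<Rightarrow> real^'m::finite"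
  assumes cG: "\<And>x. continuous (at x) G0"
  shows "probe G0 \<in> borel_measurable borel"
proof -
  define P :: "complex^'k \<Rightarrow> real^'k" where "P z = (\<chi> i. Re ((z$i + inverse (z$i)) / 2))" for z
  have "P \<in> borel_measurable borel"
  proof (subst borel_measurable_euclidean_space, intro ballI)
    fix b :: "real^'k" assume "b \<in> Basis"
    then obtain j u where b: "b = axis j u" "u \<in> (Basis :: real set)" unfolding Basis_vec_def by blast
    then have "(\<lambda>z. P z \<bullet> b) = (\<lambda>z. Re ((z$j + inverse (z$j)) / 2) * u)"
      by (simp add: P_def inner_axis)
    moreover have "(\<lambda>z::complex^'k. z $ j) \<in> borel_measurable borel"
      by (rule borel_measurable_continuous_onI) (intro continuous_intros)
    then have "(\<lambda>z::complex^'k. Re ((z$j + inverse (z$j)) / 2) * u) \<in> borel_measurable borel"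
      by measurable
    ultimately show "(\<lambda>z. P z \<bullet> b) \<in> borel_measurable borel" by simp
  qed
  moreover have "G0 \<in> borel_measurable borel"
    by (rule borel_measurable_continuous_onI) (simp add: continuous_at_imp_continuous_on cG)
  ultimately have "(\<lambda>z. G0 (P z)) \<in> borel_measurable borel" by measurable
  then show ?thesis by (simp add: probe_def[abs_def] P_def)
qed

lemma mean_field_close:
  fixes G0 :: "real^'k::finite \<Rightarrow> real^'m::finite" and f :: "real^'d::finite \<Rightarrow> real^'m \<Rightarrow> real^'d"
    and \<pi> :: "(complex^'k) measure"
  assumes ps: "prob_space \<pi>" and sets: "sets \<pi> = sets borel"
    and meas: "probe G0 \<in> borel_measurable borel"
    and AEb: "AE z in \<pi>. norm (probe G0 z) \<le> MG"
    and lip: "\<And>\<theta> \<xi> \<xi>'. norm (f \<theta> \<xi>' - f \<theta> \<xi>) \<le> L * norm (\<xi>' - \<xi>)"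
    and L: "L \<ge> 0"
    and xi: "norm \<xi> \<le> MG"
  shows "norm (f \<theta> \<xi> - mean_field \<pi> G0 f \<theta>) \<le> 2 * L * MG"
proof -
  interpret prob_space \<pi> by (rule ps)
  have cf: "continuous_on UNIV (f \<theta>)"
  proof -
    have "L-lipschitz_on UNIV (f \<theta>)" unfolding lipschitz_on_def using lip L by (simp add: dist_norm)
    then show ?thesis by (rule lipschitz_on_continuous_on)
  qed
  have mf: "f \<theta> \<in> borel_measurable borel" by (rule borel_measurable_continuous_onI[OF cf])
  have m1: "(\<lambda>z. f \<theta> (probe G0 z)) \<in> borel_measurable \<pi>"
  proof -
    have "probe G0 \<in> borel_measurable \<pi>" using meas measurable_cong_sets[OF sets refl] by blast
    then show ?thesis using mf by measurable
  qed
  have int1: "integrable \<pi> (\<lambda>z. f \<theta> (probe G0 z))"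
  proof (rule integrable_const_bound[where B = "norm (f \<theta> 0) + L * MG"])
    show "AE z in \<pi>. norm (f \<theta> (probe G0 z)) \<le> norm (f \<theta> 0) + L * MG"
      using AEb
    proof (rule AE_mp, intro AE_I2 impI)
      fix z assume b: "norm (probe G0 z) \<le> MG"
      have "norm (f \<theta> (probe G0 z) - f \<theta> 0) \<le> L * norm (probe G0 z - 0)" by (rule lip)
      also have "\<dots> \<le> L * MG" using b L by (simp add: mult_left_mono)
      finally show "norm (f \<theta> (probe G0 z)) \<le> norm (f \<theta> 0) + L * MG"
        using norm_triangle_sub[of "f \<theta> (probe G0 z)" "f \<theta> 0"] by linarith
    qed
  qed (rule m1)
  have int2: "integrable \<pi> (\<lambda>z. f \<theta> \<xi> - f \<theta> (probe G0 z))"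
    using int1 by simp
  have "f \<theta> \<xi> - mean_field \<pi> G0 f \<theta> = (\<integral>z. f \<theta> \<xi> \<partial>\<pi>) - (\<integral>z. f \<theta> (probe G0 z) \<partial>\<pi>)"
    by (simp add: mean_field_def prob_space)
  also have "\<dots> = (\<integral>z. f \<theta> \<xi> - f \<theta> (probe G0 z) \<partial>\<pi>)"
    by (rule Bochner_Integration.integral_diff[symmetric]) (simp_all add: int1)
  finally have eq: "f \<theta> \<xi> - mean_field \<pi> G0 f \<theta> = (\<integral>z. f \<theta> \<xi> - f \<theta> (probe G0 z) \<partial>\<pi>)" .
  have "norm (\<integral>z. f \<theta> \<xi> - f \<theta> (probe G0 z) \<partial>\<pi>) \<le> (\<integral>z. norm (f \<theta> \<xi> - f \<theta> (probe G0 z)) \<partial>\<pi>)"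
    by (rule integral_norm_bound)
  also have "\<dots> \<le> (\<integral>z. 2 * L * MG \<partial>\<pi>)"
  proof (rule integral_mono_AE)
    show "integrable \<pi> (\<lambda>z. norm (f \<theta> \<xi> - f \<theta> (probe G0 z)))" using int2 by simp
    show "integrable \<pi> (\<lambda>z. 2 * L * MG)" by simp
    show "AE z in \<pi>. norm (f \<theta> \<xi> - f \<theta> (probe G0 z)) \<le> 2 * L * MG"
      using AEb
    proof (rule AE_mp, intro AE_I2 impI)
      fix z assume b: "norm (probe G0 z) \<le> MG"
      have "norm (f \<theta> \<xi> - f \<theta> (probe G0 z)) \<le> L * norm (\<xi> - probe G0 z)" by (rule lip)
      also have "norm (\<xi> - probe G0 z) \<le> 2 * MG"
        using norm_triangle_ineq4[of \<xi> "probe G0 z"] b xi by linarith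
      then have "L * norm (\<xi> - probe G0 z) \<le> L * (2 * MG)" using L by (rule mult_left_mono)
      finally show "norm (f \<theta> \<xi> - f \<theta> (probe G0 z)) \<le> 2 * L * MG" by simp
    qed
  qed
  also have "\<dots> = 2 * L * MG" by (simp add: prob_space)
  finally show ?thesis using eq by simp
qed

lemma gronwall_like:
  fixes e :: "real \<Rightarrow> 'a::real_normed_vector"
  assumes de: "\<And>s. s \<in> {0..S} \<Longrightarrow> (e has_vector_derivative e' s) (at s within {0..S})"
    and a: "a > 0" and L: "L > 0"
    and bnd: "\<And>s. s \<in> {0..S} \<Longrightarrow> norm (e' s) \<le> a * (B + L * norm (e s))"
    and init: "norm (e 0) < K0"
    and s: "s \<in> {0..S}"
  shows "norm (e s) < (K0 + (B + 1) / L) * exp (a * L * s) - (B + 1) / L"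
proof -
  define g where "g s = (K0 + (B + 1) / L) * exp (a * L * s) - (B + 1) / L" for s
  define g' where "g' s = (K0 + (B + 1) / L) * (exp (a * L * s) * (a * L))" for s
  have dg: "(g has_vector_derivative g' s) (at s within {0..S})" for s
  proof -
    have "(g has_real_derivative g' s) (at s within {0..S})"
      unfolding g_def g'_def by (auto intro!: derivative_eq_intros)
    then show ?thesis by (simp add: has_real_derivative_iff_has_vector_derivative)
  qed
  have g'eq: "g' s = a * L * g s + a * (B + 1)" for s
    using L by (simp add: g_def g'_def field_simps)
  have "norm (e s) < g s"
  proof (rule compare_first_crossing[OF de dg _ _ s])
    show "norm (e 0) < g 0" using init by (simp add: g_def)
    fix s assume s: "s \<in> {0..S}" and eq: "norm (e s) = g s"
    have "norm (e' s) \<le> a * (B + L * g s)" using bnd[OF s] eq by simp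
    also have "\<dots> < g' s" using a by (simp add: g'eq algebra_simps)
    finally show "norm (e' s) < g' s" .
  qed
  then show ?thesis by (simp add: g_def)
qed

locale core =
  fixes Fb :: "real^'d::finite \<Rightarrow> real^'d" and L :: real
    and V :: "real^'d \<Rightarrow> real" and LV \<delta>0 \<delta>1 T C A :: real
  assumes L: "L > 0" and Fb_lip: "\<And>x y. norm (Fb x - Fb y) \<le> L * norm (x - y)"
    and T: "T > 0" and d0: "\<delta>0 > 0" and d1: "\<delta>1 > 0"
    and V_nonneg: "\<And>\<theta>. V \<theta> \<ge> 0"
    and V_lip: "\<And>\<theta> \<theta>'. \<bar>V \<theta>' - V \<theta>\<bar> \<le> LV * norm (\<theta>' - \<theta>)"
    and LV: "LV \<ge> 0"
    and V_coer: "\<And>\<theta>. norm \<theta> \<ge> inverse \<delta>0 \<Longrightarrow> V \<theta> \<ge> norm \<theta>"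
    and V_dec: "\<And>\<theta>s \<tau>. mean_flow_solution Fb \<theta>s \<Longrightarrow> \<tau> \<ge> 0 \<Longrightarrow> norm (\<theta>s \<tau>) > inverse \<delta>1 \<Longrightarrow>
                   V (\<theta>s (\<tau> + T)) - V (\<theta>s \<tau>) \<le> - \<delta>1 * norm (\<theta>s \<tau>)"
    and C: "C \<ge> 0" and A: "A \<ge> 0"
begin

definition drv :: "real \<Rightarrow> (real \<Rightarrow> real^'d \<Rightarrow> real^'d) \<Rightarrow> (real \<Rightarrow> real^'d) \<Rightarrow> bool" where
  "drv \<alpha> h \<Theta> \<longleftrightarrow> (\<forall>t\<ge>0. (\<Theta> has_vector_derivative \<alpha> *\<^sub>R h t (\<Theta> t)) (at t within {0..}))
     \<and> (\<forall>t\<ge>0. \<forall>\<theta>. norm (h t \<theta> - Fb \<theta>) \<le> C \<and> norm (h t \<theta>) \<le> A + L * norm \<theta>)"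

lemma drv_shift:
  assumes "drv \<alpha> h \<Theta>" "u \<ge> 0"
  shows "drv \<alpha> (\<lambda>t. h (u + t)) (\<lambda>t. \<Theta> (u + t))"
  unfolding drv_def
proof (intro conjI allI impI)
  fix t :: real assume t: "t \<ge> 0"
  have d: "(\<Theta> has_vector_derivative \<alpha> *\<^sub>R h (u + t) (\<Theta> (u + t))) (at (u + t) within {0..})"
    using assms t unfolding drv_def by simp
  have d1: "((\<lambda>t. u + t) has_vector_derivative 1) (at t within {0..})"
    by (auto intro!: derivative_eq_intros)
  have "(\<lambda>t. u + t) ` {0..} \<subseteq> {0..}" using assms(2) by auto
  then have d': "(\<Theta> has_vector_derivative \<alpha> *\<^sub>R h (u + t) (\<Theta> (u + t))) (at (u + t) within (\<lambda>t. u + t) ` {0..})"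
    using d has_vector_derivative_within_subset by blast
  show "((\<lambda>t. \<Theta> (u + t)) has_vector_derivative \<alpha> *\<^sub>R h (u + t) (\<Theta> (u + t))) (at t within {0..})"
    using vector_diff_chain_within[OF d1 d'] by (simp add: o_def)
next
  fix t :: real and \<theta> assume t: "t \<ge> 0"
  then show "norm (h (u + t) \<theta> - Fb \<theta>) \<le> C" "norm (h (u + t) \<theta>) \<le> A + L * norm \<theta>"
    using assms unfolding drv_def by auto
qed

lemma drv_cont:
  assumes "drv \<alpha> h \<Theta>"
  shows "continuous_on {0..} \<Theta>"
proof -
  have "continuous (at t within {0..}) \<Theta>" if "t \<in> {0..}" for t
    using assms that unfolding drv_def by (meson atLeast_iff has_vector_derivative_continuous)
  then show ?thesis by (simp add: continuous_on_eq_continuous_within)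
qed

definition "G1 = (2 + (A + 1) / L) * exp (L * T)"

lemma growth:
  assumes dr: "drv \<alpha> h \<Theta>" and al: "0 < \<alpha>" "\<alpha> \<le> 1" and s: "s \<in> {0..T/\<alpha>}"
  shows "norm (\<Theta> s) \<le> (norm (\<Theta> 0) + 1 + (A + 1) / L) * exp (L * T)"
proof -
  have de: "(\<Theta> has_vector_derivative \<alpha> *\<^sub>R h s (\<Theta> s)) (at s within {0..T/\<alpha>})" if "s \<in> {0..T/\<alpha>}" for s
    using dr that unfolding drv_def by (auto intro: has_vector_derivative_within_subset)
  have bnd: "norm (\<alpha> *\<^sub>R h s (\<Theta> s)) \<le> \<alpha> * (A + L * norm (\<Theta> s))" if "s \<in> {0..T/\<alpha>}" for s
    using dr that al unfolding drv_def by (auto intro: mult_left_mono)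
  have "norm (\<Theta> s) < (norm (\<Theta> 0) + 1 + (A + 1) / L) * exp (\<alpha> * L * s) - (A + 1) / L"
    by (rule gronwall_like[OF de al(1) L bnd _ s]) auto
  also have "\<dots> \<le> (norm (\<Theta> 0) + 1 + (A + 1) / L) * exp (L * T)"
  proof -
    have "\<alpha> * s \<le> T" using s al by (auto simp: field_simps)
    then have "\<alpha> * L * s \<le> L * T" using L by (metis mult.commute mult.left_commute mult_left_mono less_imp_le)
    then have "exp (\<alpha> * L * s) \<le> exp (L * T)" by simp
    moreover have "0 \<le> norm (\<Theta> 0) + 1 + (A + 1) / L" using A L by simp
    ultimately have "(norm (\<Theta> 0) + 1 + (A + 1) / L) * exp (\<alpha> * L * s) \<le> (norm (\<Theta> 0) + 1 + (A + 1) / L) * exp (L * T)"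
      by (rule mult_left_mono)
    moreover have "0 \<le> (A + 1) / L" using A L by simp
    ultimately show ?thesis by linarith
  qed
  finally show ?thesis by simp
qed

definition "D = (1 + (C + 1) / L) * exp (L * T)"

lemma window:
  assumes dr: "drv \<alpha> h \<Theta>" and al: "0 < \<alpha>" "\<alpha> \<le> 1" and big: "norm (\<Theta> 0) > inverse \<delta>1"
  shows "V (\<Theta> (T/\<alpha>)) \<le> V (\<Theta> 0) - \<delta>1 * norm (\<Theta> 0) + LV * D"
proof -
  obtain thv where th0: "thv 0 = \<Theta> 0"
    and thd: "\<forall>t\<ge>0. (thv has_vector_derivative Fb (thv t)) (at t within {0..})"
    using ode_exists[OF Fb_lip, of "\<Theta> 0"] L by auto
  have mfs: "mean_flow_solution Fb thv" using thd by (simp add: mean_flow_solution_def)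
  have dec: "V (thv T) - V (thv 0) \<le> - \<delta>1 * norm (thv 0)"
    using V_dec[OF mfs, of 0] big th0 by simp
  define S where "S = T / \<alpha>"
  define e where "e s = \<Theta> s - thv (\<alpha> * s)" for s
  define e' where "e' s = \<alpha> *\<^sub>R h s (\<Theta> s) - \<alpha> *\<^sub>R Fb (thv (\<alpha> * s))" for s
  have de: "(e has_vector_derivative e' s) (at s within {0..S})" if s: "s \<in> {0..S}" for s
  proof -
    have d1: "(\<Theta> has_vector_derivative \<alpha> *\<^sub>R h s (\<Theta> s)) (at s within {0..S})"
      using dr s unfolding drv_def by (auto intro: has_vector_derivative_within_subset)
    have dm: "((\<lambda>s. \<alpha> * s) has_vector_derivative \<alpha>) (at s within {0..S})"
      by (auto intro!: derivative_eq_intros simp: has_real_derivative_iff_has_vector_derivative[symmetric])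
    have sub: "(\<lambda>s. \<alpha> * s) ` {0..S} \<subseteq> {0..}" using al by auto
    have "(thv has_vector_derivative Fb (thv (\<alpha> * s))) (at (\<alpha> * s) within {0..})"
      using thd s al by simp
    then have "(thv has_vector_derivative Fb (thv (\<alpha> * s))) (at (\<alpha> * s) within (\<lambda>s. \<alpha> * s) ` {0..S})"
      using sub has_vector_derivative_within_subset by blast
    from vector_diff_chain_within[OF dm this]
    have d2: "((\<lambda>s. thv (\<alpha> * s)) has_vector_derivative \<alpha> *\<^sub>R Fb (thv (\<alpha> * s))) (at s within {0..S})"
      by (simp add: o_def)
    show ?thesis unfolding e_def e'_def by (rule has_vector_derivative_diff[OF d1 d2])
  qed
  have bnd: "norm (e' s) \<le> \<alpha> * (C + L * norm (e s))" if s: "s \<in> {0..S}" for s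
  proof -
    have n1: "norm (e' s) = \<alpha> * norm (h s (\<Theta> s) - Fb (thv (\<alpha> * s)))"
      using al by (simp add: e'_def scaleR_diff_right[symmetric])
    have "norm (h s (\<Theta> s) - Fb (thv (\<alpha> * s))) \<le> norm (h s (\<Theta> s) - Fb (\<Theta> s)) + norm (Fb (\<Theta> s) - Fb (thv (\<alpha> * s)))"
      using norm_triangle_ineq[of "h s (\<Theta> s) - Fb (\<Theta> s)" "Fb (\<Theta> s) - Fb (thv (\<alpha> * s))"] by simp
    also have "\<dots> \<le> C + L * norm (e s)"
      using dr s Fb_lip[of "\<Theta> s" "thv (\<alpha> * s)"] unfolding drv_def e_def by (auto intro: add_mono)
    finally show ?thesis using al n1 by (simp add: mult_left_mono)
  qed
  have Sin: "S \<in> {0..S}" using T al by (simp add: S_def)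
  have e0: "norm (e 0) < 1" by (simp add: e_def th0[symmetric])
  have "norm (e S) < (1 + (C + 1) / L) * exp (\<alpha> * L * S) - (C + 1) / L"
    by (rule gronwall_like[OF de al(1) L bnd e0 Sin])
  also have "\<dots> \<le> D"
  proof -
    have "\<alpha> * L * S = L * T" using al by (simp add: S_def)
    then have ee: "exp (\<alpha> * L * S) = exp (L * T)" by simp
    have "0 \<le> (C + 1) / L" using C L by simp
    then show ?thesis unfolding D_def ee by linarith
  qed
  finally have eS: "norm (e S) \<le> D" by simp
  have aS: "\<alpha> * S = T" using al by (simp add: S_def)
  have "V (\<Theta> S) - V (thv T) \<le> LV * norm (\<Theta> S - thv T)"
    using V_lip[of "thv T" "\<Theta> S"] by (simp add: abs_le_iff norm_minus_commute)
  also have "\<dots> \<le> LV * D" using eS aS LV by (simp add: e_def mult_left_mono)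
  finally show ?thesis using dec th0 by (simp add: S_def)
qed

definition "R = max 1 (max (inverse \<delta>1) (max (inverse \<delta>0) (max (V 0) (2 * LV * D / \<delta>1))))"
definition "rho = max (1/2) (1 - \<delta>1 / (2 * (LV + 1)))"

lemma R_ge: "R \<ge> 1" "R \<ge> inverse \<delta>1" "R \<ge> inverse \<delta>0" "R \<ge> V 0" "R \<ge> 2 * LV * D / \<delta>1"
  unfolding R_def by auto

lemma rho: "0 < rho" "rho < 1"
proof -
  show "0 < rho" unfolding rho_def by simp
  have "\<delta>1 / (2 * (LV + 1)) > 0" using d1 LV by simp
  then show "rho < 1" unfolding rho_def by simp
qed

lemma step:
  assumes dr: "drv \<alpha> h \<Theta>" and al: "0 < \<alpha>" "\<alpha> \<le> 1" and big: "norm (\<Theta> 0) > R"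
  shows "V (\<Theta> (T/\<alpha>)) \<le> rho * V (\<Theta> 0)"
proof -
  define n where "n = norm (\<Theta> 0)"
  have "n > inverse \<delta>1" using big R_ge(2) by (simp add: n_def)
  then have w: "V (\<Theta> (T/\<alpha>)) \<le> V (\<Theta> 0) - \<delta>1 * n + LV * D"
    using window[OF dr al] by (simp add: n_def)
  have "\<delta>1 * R \<ge> 2 * LV * D" using R_ge(5) d1 by (simp add: field_simps)
  moreover have "\<delta>1 * R \<le> \<delta>1 * n" using big d1 by (simp add: n_def)
  ultimately have w2: "V (\<Theta> (T/\<alpha>)) \<le> V (\<Theta> 0) - (\<delta>1 / 2) * n" using w by linarith
  have "V (\<Theta> 0) - V 0 \<le> LV * n" using V_lip[of 0 "\<Theta> 0"] by (simp add: n_def abs_le_iff)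
  then have "V (\<Theta> 0) \<le> (LV + 1) * n" using R_ge(4) big by (simp add: n_def algebra_simps)
  then have "V (\<Theta> 0) / (LV + 1) \<le> n" using LV by (simp add: field_simps)
  then have "(\<delta>1 / 2) * (V (\<Theta> 0) / (LV + 1)) \<le> (\<delta>1 / 2) * n" using d1 by (intro mult_left_mono) auto
  then have "V (\<Theta> (T/\<alpha>)) \<le> V (\<Theta> 0) - (\<delta>1 / 2) * (V (\<Theta> 0) / (LV + 1))" using w2 by linarith
  also have "\<dots> = (1 - \<delta>1 / (2 * (LV + 1))) * V (\<Theta> 0)" using LV by (simp add: field_simps)
  also have "\<dots> \<le> rho * V (\<Theta> 0)" unfolding rho_def by (intro mult_right_mono V_nonneg) auto
  finally show ?thesis .
qed

lemma iter:
  assumes dr: "drv \<alpha> h \<Theta>" and al: "0 < \<alpha>" "\<alpha> \<le> 1"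
  shows "(\<forall>s\<in>{0..real k * (T/\<alpha>)}. norm (\<Theta> s) > R) \<Longrightarrow> V (\<Theta> (real k * (T/\<alpha>))) \<le> rho ^ k * V (\<Theta> 0)"
proof (induction k)
  case 0 then show ?case by simp
next
  case (Suc k)
  define u where "u = real k * (T/\<alpha>)"
  have u0: "u \<ge> 0" using T al by (simp add: u_def)
  have us: "real (Suc k) * (T/\<alpha>) = u + T/\<alpha>" by (simp add: u_def algebra_simps)
  have sub: "{0..u} \<subseteq> {0..real (Suc k) * (T/\<alpha>)}" using us T al by auto
  have IH: "V (\<Theta> u) \<le> rho ^ k * V (\<Theta> 0)" using Suc sub unfolding u_def by auto
  have big: "norm (\<Theta> (u + 0)) > R" using Suc.prems u0 us T al by simp
  have "V ((\<lambda>t. \<Theta> (u + t)) (T/\<alpha>)) \<le> rho * V ((\<lambda>t. \<Theta> (u + t)) 0)"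
    by (rule step[OF drv_shift[OF dr u0] al]) (use big in simp)
  then have "V (\<Theta> (u + T/\<alpha>)) \<le> rho * V (\<Theta> u)" by simp
  also have "\<dots> \<le> rho * (rho ^ k * V (\<Theta> 0))" using IH rho by (intro mult_left_mono) auto
  finally show ?case using us by simp
qed

definition "dr = - ln rho / T"
definition "bb = G1 * (LV + 1) / rho"

lemma dr_pos: "dr > 0"
proof -
  have "ln rho < 0" using rho by simp
  then show ?thesis using T by (simp add: dr_def divide_neg_pos)
qed
lemma G1_ge: "G1 \<ge> 1"
proof -
  have "2 + (A + 1) / L \<ge> 1" using A L by simp
  moreover have "exp (L * T) \<ge> 1" using L T by simp
  ultimately have "1 * 1 \<le> (2 + (A + 1) / L) * exp (L * T)" by (intro mult_mono) auto
  then show ?thesis unfolding G1_def by simp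
qed
lemma bb_ge: "bb \<ge> 1"
proof -
  have "1 * 1 \<le> G1 * (LV + 1)" using G1_ge LV by (intro mult_mono) auto
  then have x1: "1 \<le> G1 * (LV + 1)" by simp
  have "G1 * (LV + 1) * rho \<le> G1 * (LV + 1) * 1" using x1 rho by (intro mult_left_mono) auto
  then have "G1 * (LV + 1) \<le> G1 * (LV + 1) / rho" using rho by (simp add: le_divide_eq)
  then show ?thesis unfolding bb_def using x1 by linarith
qed

lemma expo:
  assumes drv: "drv \<alpha> h \<Theta>" and al: "0 < \<alpha>" "\<alpha> \<le> 1" and t: "t \<ge> 0"
    and big: "\<forall>s\<in>{0..<t}. norm (\<Theta> s) > R"
  shows "norm (\<Theta> t) \<le> bb * norm (\<Theta> 0) * exp (- \<alpha> * dr * t)"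
proof (cases "t = 0")
  case True
  have "norm (\<Theta> 0) \<le> bb * norm (\<Theta> 0)" using bb_ge by (simp add: mult_le_cancel_right1)
  then show ?thesis using True by simp
next
  case False
  then have tpos: "t > 0" using t by simp
  define P where "P = T / \<alpha>"
  have P: "P > 0" using T al by (simp add: P_def)
  define q where "q = t / P"
  have q: "q > 0" using tpos P by (simp add: q_def)
  define k where "k = nat (ceiling q) - 1"
  have c1: "ceiling q \<ge> 1" using q by (simp add: one_le_ceiling)  
  have n1: "nat (ceiling q) \<ge> 1" using c1 by linarith
  have r1: "real k = real (nat (ceiling q)) - 1" using n1 unfolding k_def by (simp add: of_nat_diff)
  have r2: "real (nat (ceiling q)) = real_of_int (ceiling q)" using c1 by simp
  have rk: "real k = real_of_int (ceiling q) - 1" using r1 r2 by simp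
  have k_lt: "real k < q" using rk ceiling_less_cancel by (smt (verit) ceiling_correct)
  have k_ge: "q \<le> real k + 1" using rk le_of_int_ceiling by simp
  define u where "u = real k * P"
  have u0: "u \<ge> 0" using P by (simp add: u_def)
  have ut: "u < t" using k_lt P by (simp add: u_def q_def field_simps)
  have tu: "t - u \<le> P" using k_ge P by (simp add: u_def q_def field_simps)
  have big0: "norm (\<Theta> 0) > R" using big tpos by simp
  have bigu: "\<forall>s\<in>{0..real k * (T/\<alpha>)}. norm (\<Theta> s) > R" using big ut by (auto simp: u_def P_def)
  have Vu: "V (\<Theta> u) \<le> rho ^ k * V (\<Theta> 0)" using iter[OF drv al bigu] by (simp add: u_def P_def)
  have "V (\<Theta> 0) - V 0 \<le> LV * norm (\<Theta> 0)" using V_lip[of 0 "\<Theta> 0"] by (simp add: abs_le_iff)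
  then have V0: "V (\<Theta> 0) \<le> (LV + 1) * norm (\<Theta> 0)" using R_ge(4) big0 by (simp add: algebra_simps)
  have nu_big: "norm (\<Theta> u) > R" using big u0 ut by simp
  then have nu: "norm (\<Theta> u) \<le> V (\<Theta> u)" using R_ge(3) by (intro V_coer) simp
  have "norm ((\<lambda>s. \<Theta> (u + s)) (t - u)) \<le> (norm ((\<lambda>s. \<Theta> (u + s)) 0) + 1 + (A + 1) / L) * exp (L * T)"
    by (rule growth[OF drv_shift[OF drv u0] al]) (use ut tu in \<open>simp add: P_def\<close>)
  then have g: "norm (\<Theta> t) \<le> (norm (\<Theta> u) + 1 + (A + 1) / L) * exp (L * T)" by simp
  have "norm (\<Theta> u) + 1 + (A + 1) / L \<le> (2 + (A + 1) / L) * norm (\<Theta> u)"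
  proof -
    have n1: "norm (\<Theta> u) \<ge> 1" using nu_big R_ge(1) by simp
    have "(A + 1) / L * 1 \<le> (A + 1) / L * norm (\<Theta> u)" using n1 A L by (intro mult_left_mono) auto
    then show ?thesis using n1 by (simp add: algebra_simps)
  qed
  then have "norm (\<Theta> t) \<le> G1 * norm (\<Theta> u)"
    using g unfolding G1_def by (smt (verit) exp_gt_zero mult_right_mono mult.commute mult.left_commute)
  also have "\<dots> \<le> G1 * (rho ^ k * ((LV + 1) * norm (\<Theta> 0)))"
  proof -
    have "norm (\<Theta> u) \<le> rho ^ k * V (\<Theta> 0)" using nu Vu by linarith
    also have "\<dots> \<le> rho ^ k * ((LV + 1) * norm (\<Theta> 0))" using V0 rho by (intro mult_left_mono) auto
    finally show ?thesis using G1_ge by (intro mult_left_mono) auto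
  qed
  also have "\<dots> \<le> G1 * ((exp (- \<alpha> * dr * t) / rho) * ((LV + 1) * norm (\<Theta> 0)))"
  proof -
    have lr: "ln rho < 0" using rho by simp
    have "rho ^ k = exp (real k * ln rho)" using rho by (simp add: exp_of_nat_mult)
    also have "real k * ln rho \<le> (q - 1) * ln rho" using k_ge lr by (intro mult_right_mono_neg) auto
    then have "exp (real k * ln rho) \<le> exp ((q - 1) * ln rho)" by simp
    also have "(q - 1) * ln rho = - \<alpha> * dr * t - ln rho"
      using T al by (simp add: q_def P_def dr_def field_simps)
    also have "exp (- \<alpha> * dr * t - ln rho) = exp (- \<alpha> * dr * t) / rho"
      using rho by (simp add: exp_diff)
    finally have "rho ^ k \<le> exp (- \<alpha> * dr * t) / rho" .
    then show ?thesis using G1_ge LV by (intro mult_left_mono mult_right_mono) auto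
  qed
  also have "\<dots> = bb * norm (\<Theta> 0) * exp (- \<alpha> * dr * t)" by (simp add: bb_def field_simps)
  finally show ?thesis .
qed

definition "Bu = max R (bb * ((R + 1 + (A + 1) / L) * exp (L * T)))"

lemma hits:
  assumes drv: "drv \<alpha> h \<Theta>" and al: "0 < \<alpha>" "\<alpha> \<le> 1"
  shows "\<exists>t1\<ge>0. norm (\<Theta> t1) \<le> R"
proof (rule ccontr)
  assume "\<not> ?thesis"
  then have allbig: "\<forall>t\<ge>0. norm (\<Theta> t) > R" by (meson not_le)
  define c where "c = \<alpha> * dr"
  have c: "c > 0" using al dr_pos by (simp add: c_def)
  define M where "M = bb * norm (\<Theta> 0)"
  have M0: "M \<ge> 0" using bb_ge by (simp add: M_def)
  have R0: "R > 0" using R_ge(1) by simp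
  define t where "t = M / (R * c) + 1"
  have "M / (R * c) \<ge> 0" using M0 R0 c by simp
  then have t0: "t > 0" by (simp add: t_def)
  have "norm (\<Theta> t) \<le> M * exp (- c * t)"
    using expo[OF drv al, of t] allbig t0 by (simp add: M_def c_def mult.assoc)
  also have "M * exp (- c * t) < R"
  proof -
    have "exp (c * t) \<ge> 1 + c * t" by (rule exp_ge_add_one_self)
    moreover have "c * t = M / R + c" using c R0 by (simp add: t_def field_simps)
    ultimately have "exp (c * t) > M / R" using c by linarith
    then have "M < R * exp (c * t)" using R0 by (simp add: field_simps)
    then show ?thesis by (simp add: exp_minus field_simps)
  qed
  finally have "norm (\<Theta> t) < R" .
  moreover have "R < norm (\<Theta> t)" using allbig t0 by simp
  ultimately show False by simp
qed

lemma ultimate: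
  assumes drv: "drv \<alpha> h \<Theta>" and al: "0 < \<alpha>" "\<alpha> \<le> 1"
  shows "\<exists>t0. \<forall>t\<ge>t0. norm (\<Theta> t) \<le> Bu"
proof -
  obtain t1 where t1: "t1 \<ge> 0" "norm (\<Theta> t1) \<le> R" using hits[OF drv al] by blast
  have cont: "continuous_on {0..} \<Theta>" by (rule drv_cont[OF drv])
  have "norm (\<Theta> t) \<le> Bu" if tt: "t \<ge> t1" for t
  proof -
    define S where "S = {u\<in>{t1..t}. norm (\<Theta> u) \<le> R}"
    have t1S: "t1 \<in> S" using t1 tt by (simp add: S_def)
    have bdd: "bdd_above S" by (auto simp: S_def bdd_above_def)
    define s where "s = Sup S"
    have s_ge: "a \<le> s" if "a \<in> S" for a using that bdd by (simp add: s_def cSup_upper)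
    have s1: "t1 \<le> s" using s_ge t1S .
    have s2: "s \<le> t" using t1S by (auto simp: s_def S_def intro!: cSup_least)
    have after: "norm (\<Theta> u) > R" if "u \<in> {s<..t}" for u
    proof (rule ccontr)
      assume "\<not> norm (\<Theta> u) > R"
      then have "u \<in> S" using that s1 by (simp add: S_def)
      then show False using s_ge that by fastforce
    qed
    have cont2: "continuous_on {t1..t} (\<lambda>u. R - norm (\<Theta> u))"
      using continuous_on_subset[OF cont, of "{t1..t}"] t1 by (auto intro!: continuous_intros)
    have sS: "norm (\<Theta> s) \<le> R"
    proof (rule ccontr)
      assume "\<not> norm (\<Theta> s) \<le> R"
      then have "R - norm (\<Theta> s) < 0" by simp
      moreover have "s \<in> {t1..t}" using s1 s2 by simp
      ultimately obtain d where d: "d > 0" "\<forall>u\<in>{t1..t}. dist u s < d \<longrightarrow> R - norm (\<Theta> u) < 0"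
        using cont_neg_nbhd[OF cont2] by blast
      have "S \<noteq> {}" using t1S by blast
      moreover have "s - d < Sup S" using d(1) by (simp add: s_def)
      ultimately obtain a where a: "a \<in> S" "s - d < a" using less_cSupD[of S "s - d"] unfolding s_def by blast
      have "a \<le> s" using s_ge a(1) .
      then have "dist a s < d" using a(2) by (simp add: dist_real_def)
      moreover have "a \<in> {t1..t}" using a(1) by (simp add: S_def)
      ultimately have "R - norm (\<Theta> a) < 0" using d(2) by blast
      then show False using a(1) by (simp add: S_def)
    qed
    show ?thesis
    proof (cases "s = t")
      case True then show ?thesis using sS by (simp add: Bu_def)
    next
      case False
      then have st: "s < t" using s2 by simp
      define u0 where "u0 = s + min (T/\<alpha>) (t - s) / 2"
      have Ta: "T/\<alpha> > 0" using T al by simp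
      have u0s: "s < u0" using st Ta by (simp add: u0_def)
      have u0t: "u0 < t"
      proof -
        obtain m where m: "m = min (T/\<alpha>) (t - s)" by blast
        have "m \<le> t - s" unfolding m by (rule min.cobounded2)
        then have "s + m / 2 < t" using st by linarith
        then show ?thesis by (simp add: u0_def m)
      qed
      have s0: "s \<ge> 0" using s1 t1 by simp
      have "norm ((\<lambda>r. \<Theta> (s + r)) (u0 - s)) \<le> (norm ((\<lambda>r. \<Theta> (s + r)) 0) + 1 + (A + 1) / L) * exp (L * T)"
      proof (rule growth[OF drv_shift[OF drv s0] al])
        obtain m where m: "m = min (T/\<alpha>) (t - s)" by blast
        have "m \<le> T/\<alpha>" unfolding m by (rule min.cobounded1)
        then have "m / 2 \<le> T/\<alpha>" using Ta by linarith
        then show "u0 - s \<in> {0..T/\<alpha>}" using u0s by (simp add: u0_def m)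
      qed
      then have gu: "norm (\<Theta> u0) \<le> (norm (\<Theta> s) + 1 + (A + 1) / L) * exp (L * T)" by simp
      also have "\<dots> \<le> (R + 1 + (A + 1) / L) * exp (L * T)" using sS by simp
      finally have gu2: "norm (\<Theta> u0) \<le> (R + 1 + (A + 1) / L) * exp (L * T)" .
      have u00: "u0 \<ge> 0" using u0s s0 by simp
      have "norm ((\<lambda>r. \<Theta> (u0 + r)) (t - u0)) \<le> bb * norm ((\<lambda>r. \<Theta> (u0 + r)) 0) * exp (- \<alpha> * dr * (t - u0))"
      proof (rule expo[OF drv_shift[OF drv u00] al])
        show "0 \<le> t - u0" using u0t by simp
        show "\<forall>r\<in>{0..<t - u0}. R < norm ((\<lambda>r. \<Theta> (u0 + r)) r)"
          using after u0s by auto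
      qed
      then have "norm (\<Theta> t) \<le> bb * norm (\<Theta> u0) * exp (- \<alpha> * dr * (t - u0))" by simp
      also have "\<dots> \<le> bb * norm (\<Theta> u0) * 1"
      proof -
        have "- \<alpha> * dr * (t - u0) \<le> 0" using al dr_pos u0t by simp
        then have "exp (- \<alpha> * dr * (t - u0)) \<le> 1" by simp
        then show ?thesis using bb_ge by (intro mult_left_mono) auto
      qed
      also have "\<dots> \<le> bb * ((R + 1 + (A + 1) / L) * exp (L * T))" using gu2 bb_ge by simp
      finally show ?thesis by (simp add: Bu_def)
    qed
  qed
  then show ?thesis by blast
qed

end

lemma unit_clock_from:
  assumes "\<forall>i. norm (z0$i) = 1"
  shows "norm (clock_from \<omega> z0 t $ i) = 1"
proof -
  have "norm (exp (2 * pi * \<i> * complex_of_real (\<omega>$i * t))) = 1"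
    by (simp add: norm_exp_eq_Re)
  then show ?thesis using assms by (simp add: clock_from_def norm_mult)
qed

lemma Omega_unit:
  assumes "z \<in> clock_Omega \<omega> \<phi>"
  shows "norm (z$i) = 1"
proof -
  let ?U = "{z::complex^'a. \<forall>i. norm (z$i) = 1}"
  have cl: "closed ?U"
    unfolding Collect_all_eq
    by (intro closed_INT ballI closed_Collect_eq continuous_intros) 
  have "range (clock \<omega> \<phi>) \<subseteq> ?U"
    by (auto simp: clock_def norm_exp_eq_Re)
  then have "clock_Omega \<omega> \<phi> \<subseteq> ?U" unfolding clock_Omega_def by (rule closure_minimal[OF _ cl])
  then show ?thesis using assms by blast
qed

lemma probe_arg_box:
  assumes "\<forall>i. norm (z$i) = 1"
  shows "(\<chi> i. Re ((z$i + inverse (z$i)) / 2)) \<in> cbox (\<chi> i. -1) (\<chi> i. (1::real))"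
proof -
  have "\<bar>Re ((z$i + inverse (z$i)) / 2)\<bar> \<le> 1" for i
  proof -
    have "\<bar>Re ((z$i + inverse (z$i)) / 2)\<bar> \<le> norm ((z$i + inverse (z$i)) / 2)" by (rule abs_Re_le_cmod)
    also have "\<dots> \<le> (norm (z$i) + norm (inverse (z$i))) / 2"
      by (simp add: norm_triangle_ineq divide_right_mono)
    also have "\<dots> = 1" using assms by (simp add: norm_inverse)
    finally show ?thesis .
  qed
  then have "\<forall>i. - 1 \<le> Re ((z$i + inverse (z$i)) / 2) \<and> Re ((z$i + inverse (z$i)) / 2) \<le> 1"
    by (meson abs_le_iff minus_le_iff)
  then show ?thesis unfolding mem_box_cart by simp
qed

theorem theorem2p7:
  fixes \<omega> \<phi> :: "real^'k"
    and G0 :: "real^'k \<Rightarrow> real^'m"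
    and f :: "real^'d \<Rightarrow> real^'m \<Rightarrow> real^'d"
    and \<pi> :: "(complex^'k) measure"
  assumes freq_pos: "\<forall>i. \<omega>$i > 0"
    and G0_analytic: "\<forall>x. real_analytic_at G0 x"
    and G0_taylor: "taylor_abs_summable G0"
    and f_cont: "continuous_on UNIV (\<lambda>p. f (fst p) (snd p))"
    and pi_uniform: "uniform_prob \<omega> \<phi> \<pi>"
    and A1: "\<exists>L\<^sub>f. (\<forall>\<theta> \<theta>'. norm (mean_field \<pi> G0 f \<theta>' - mean_field \<pi> G0 f \<theta>) \<le> L\<^sub>f * norm (\<theta>' - \<theta>))
              \<and> (\<forall>\<theta> \<theta>' \<xi> \<xi>'. norm (f \<theta>' \<xi> - f \<theta> \<xi>) + norm (f \<theta> \<xi>' - f \<theta> \<xi>)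
                                \<le> L\<^sub>f * (norm (\<theta>' - \<theta>) + norm (\<xi>' - \<xi>)))"
    and V4': "\<exists>(V :: real^'d \<Rightarrow> real) L\<^sub>V \<delta>\<^sub>0 \<delta>\<^sub>1 T. \<delta>\<^sub>0 > 0 \<and> \<delta>\<^sub>1 > 0 \<and> T > 0
              \<and> (\<forall>\<theta>. V \<theta> \<ge> 0)
              \<and> (\<forall>\<theta> \<theta>'. \<bar>V \<theta>' - V \<theta>\<bar> \<le> L\<^sub>V * norm (\<theta>' - \<theta>))
              \<and> (\<forall>\<theta>. norm \<theta> \<ge> inverse \<delta>\<^sub>0 \<longrightarrow> V \<theta> \<ge> norm \<theta>)
              \<and> (\<forall>\<theta>s. mean_flow_solution (mean_field \<pi> G0 f) \<theta>s \<longrightarrow>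
                   (\<forall>\<tau>\<ge>0. norm (\<theta>s \<tau>) > inverse \<delta>\<^sub>1 \<longrightarrow>
                      V (\<theta>s (\<tau> + T)) - V (\<theta>s \<tau>) \<le> - \<delta>\<^sub>1 * norm (\<theta>s \<tau>)))"
  shows "\<exists>\<alpha>\<^sub>0 > 0.
           (\<exists>b > 0. \<exists>\<delta> > 0. \<forall>\<alpha> \<in> {0<..\<alpha>\<^sub>0}. \<forall>\<Theta>0. \<forall>z0 \<in> clock_Omega \<omega> \<phi>. \<forall>\<Theta>.
              qsa_solution \<omega> G0 f \<alpha> \<Theta>0 z0 \<Theta> \<longrightarrow>
              (\<forall>t\<ge>0. (\<forall>s\<in>{0..<t}. norm (\<Theta> s) > inverse \<delta>) \<longrightarrow>
                 norm (\<Theta> t) \<le> b * norm \<Theta>0 * exp (- \<alpha> * \<delta> * t)))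
         \<and> (\<exists>B. \<forall>\<alpha> \<in> {0<..\<alpha>\<^sub>0}. \<forall>\<Theta>0. \<forall>z0 \<in> clock_Omega \<omega> \<phi>. \<forall>\<Theta>.
              qsa_solution \<omega> G0 f \<alpha> \<Theta>0 z0 \<Theta> \<longrightarrow>
              (\<exists>t0. \<forall>t\<ge>t0. norm (\<Theta> t) \<le> B))"
proof -
  obtain Lf where Lf1: "\<And>\<theta> \<theta>'. norm (mean_field \<pi> G0 f \<theta>' - mean_field \<pi> G0 f \<theta>) \<le> Lf * norm (\<theta>' - \<theta>)"
    and Lf2: "\<And>\<theta> \<theta>' \<xi> \<xi>'. norm (f \<theta>' \<xi> - f \<theta> \<xi>) + norm (f \<theta> \<xi>' - f \<theta> \<xi>) \<le> Lf * (norm (\<theta>' - \<theta>) + norm (\<xi>' - \<xi>))"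
    using A1 by blast
  obtain V LV \<delta>0 \<delta>1 T where d0: "\<delta>0 > 0" and d1: "\<delta>1 > 0" and T: "T > 0"
    and Vnn: "\<And>\<theta>. V \<theta> \<ge> 0"
    and Vlip: "\<And>\<theta> \<theta>'. \<bar>V \<theta>' - V \<theta>\<bar> \<le> LV * norm (\<theta>' - \<theta>)"
    and Vco: "\<And>\<theta>. norm \<theta> \<ge> inverse \<delta>0 \<Longrightarrow> V \<theta> \<ge> norm \<theta>"
    and Vdec: "\<And>\<theta>s. mean_flow_solution (mean_field \<pi> G0 f) \<theta>s \<Longrightarrow>
                   (\<forall>\<tau>\<ge>0. norm (\<theta>s \<tau>) > inverse \<delta>1 \<longrightarrow>
                      V (\<theta>s (\<tau> + T)) - V (\<theta>s \<tau>) \<le> - \<delta>1 * norm (\<theta>s \<tau>))"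
    using V4' by blast
  define Fb where "Fb = mean_field \<pi> G0 f"
  define L where "L = \<bar>Lf\<bar> + 1"
  have L: "L > 0" by (simp add: L_def)
  have Lf_le: "Lf * x \<le> L * x" if "x \<ge> 0" for x
    using that by (simp add: L_def mult_right_mono)
  have Fb_lip: "norm (Fb x - Fb y) \<le> L * norm (x - y)" for x y
    using Lf1[of x y] Lf_le[of "norm (x - y)"] by (simp add: Fb_def)
  have f_lip_xi: "norm (f \<theta> \<xi>' - f \<theta> \<xi>) \<le> L * norm (\<xi>' - \<xi>)" for \<theta> \<xi> \<xi>'
    using Lf2[of \<theta> \<xi> \<theta> \<xi>'] Lf_le[of "norm (\<xi>' - \<xi>)"] by simp
  have f_lip_th: "norm (f \<theta>' \<xi> - f \<theta> \<xi>) \<le> L * norm (\<theta>' - \<theta>)" for \<theta> \<theta>' \<xi>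
    using Lf2[of \<theta>' \<xi> \<theta> \<xi>] Lf_le[of "norm (\<theta>' - \<theta>)"] by simp
  have LV: "LV \<ge> 0"
  proof -
    have "\<bar>V (axis undefined 1) - V 0\<bar> \<le> LV * norm (axis (undefined::'d) (1::real) - 0)" by (rule Vlip)
    then show ?thesis by simp
  qed
  have cG: "\<And>x. continuous (at x) G0" using G0_analytic analytic_continuous_at by blast
  define X :: "(real^'k) set" where "X = cbox (\<chi> i. -1) (\<chi> i. (1::real))"
  have "compact (G0 ` X)" unfolding X_def
    by (intro compact_continuous_image continuous_at_imp_continuous_on ballI cG compact_cbox)
  then have "bounded (G0 ` X)" by (rule compact_imp_bounded)
  then obtain MG0 where MG0': "\<forall>y\<in>G0 ` X. norm y \<le> MG0" unfolding bounded_iff by blast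
  have MG0: "\<And>x. x \<in> X \<Longrightarrow> norm (G0 x) \<le> MG0" using MG0' by blast
  define MG where "MG = max MG0 0"
  have MG: "MG \<ge> 0" by (simp add: MG_def)
  have probe_bnd: "norm (probe G0 z) \<le> MG" if "\<forall>i. norm (z$i) = 1" for z
  proof -
    have "(\<chi> i. Re ((z$i + inverse (z$i)) / 2)) \<in> X" unfolding X_def by (rule probe_arg_box[OF that])
    then have "norm (probe G0 z) \<le> MG0" unfolding probe_def by (rule MG0)
    then show ?thesis by (simp add: MG_def)
  qed
  have ps: "prob_space \<pi>" and sets: "sets \<pi> = sets borel" and em: "emeasure \<pi> (clock_Omega \<omega> \<phi>) = 1"
    using pi_uniform unfolding uniform_prob_def by auto
  interpret P: prob_space \<pi> by (rule ps)
  have "P.prob (clock_Omega \<omega> \<phi>) = 1" using em P.emeasure_eq_measure by simp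
  then have "AE z in \<pi>. z \<in> clock_Omega \<omega> \<phi>" by (rule P.AE_prob_1)
  then have AEb: "AE z in \<pi>. norm (probe G0 z) \<le> MG"
    by (rule AE_mp) (intro AE_I2 impI probe_bnd allI Omega_unit)
  have meas: "probe G0 \<in> borel_measurable borel" by (rule probe_measurable[OF cG])
  define C where "C = 2 * L * MG"
  have close: "norm (f \<theta> \<xi> - Fb \<theta>) \<le> C" if "norm \<xi> \<le> MG" for \<theta> \<xi>
    unfolding Fb_def C_def by (rule mean_field_close[OF ps sets meas AEb f_lip_xi _ that]) (use L in simp)
  define A where "A = norm (f 0 0) + L * MG"
  have growthf: "norm (f \<theta> \<xi>) \<le> A + L * norm \<theta>" if "norm \<xi> \<le> MG" for \<theta> \<xi>
  proof -
    have "norm (f \<theta> \<xi> - f 0 \<xi>) \<le> L * norm \<theta>" using f_lip_th[where \<theta>=0 and \<theta>'=\<theta> and \<xi>=\<xi>] by simp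
    moreover have "norm (f 0 \<xi> - f 0 0) \<le> L * MG"
    proof -
      have "norm (f 0 \<xi> - f 0 0) \<le> L * norm (\<xi> - 0)" by (rule f_lip_xi)
      also have "\<dots> \<le> L * MG" using that L by (simp add: mult_left_mono)
      finally show ?thesis .
    qed
    moreover have "norm (f \<theta> \<xi>) \<le> norm (f \<theta> \<xi> - f 0 \<xi>) + norm (f 0 \<xi> - f 0 0) + norm (f 0 0)"
    proof -
      have e: "f \<theta> \<xi> = (f \<theta> \<xi> - f 0 \<xi>) + ((f 0 \<xi> - f 0 0) + f 0 0)" by simp
      have "norm ((f \<theta> \<xi> - f 0 \<xi>) + ((f 0 \<xi> - f 0 0) + f 0 0)) \<le> norm (f \<theta> \<xi> - f 0 \<xi>) + norm ((f 0 \<xi> - f 0 0) + f 0 0)"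
        by (rule norm_triangle_ineq)
      also have "\<dots> \<le> norm (f \<theta> \<xi> - f 0 \<xi>) + (norm (f 0 \<xi> - f 0 0) + norm (f 0 0))"
        using norm_triangle_ineq[of "f 0 \<xi> - f 0 0" "f 0 0"] by linarith
      finally show ?thesis using e by simp
    qed
    ultimately show ?thesis by (simp add: A_def)
  qed
  interpret K: core Fb L V LV \<delta>0 \<delta>1 T C A
  proof
    show "\<And>\<theta>s \<tau>. mean_flow_solution Fb \<theta>s \<Longrightarrow> \<tau> \<ge> 0 \<Longrightarrow> norm (\<theta>s \<tau>) > inverse \<delta>1 \<Longrightarrow>
                   V (\<theta>s (\<tau> + T)) - V (\<theta>s \<tau>) \<le> - \<delta>1 * norm (\<theta>s \<tau>)"
      using Vdec unfolding Fb_def by blast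
  qed (use L Fb_lip T d0 d1 Vnn Vlip LV Vco MG in \<open>auto simp: C_def A_def\<close>)
  have drv: "K.drv \<alpha> (\<lambda>t \<theta>. f \<theta> (probe G0 (clock_from \<omega> z0 t))) \<Theta>"
    if sol: "qsa_solution \<omega> G0 f \<alpha> \<Theta>0 z0 \<Theta>" and z0: "z0 \<in> clock_Omega \<omega> \<phi>" for \<alpha> \<Theta>0 z0 \<Theta>
  proof -
    have u: "\<forall>i. norm (z0$i) = 1" using z0 Omega_unit by blast
    have pb: "norm (probe G0 (clock_from \<omega> z0 t)) \<le> MG" for t
      by (rule probe_bnd) (use unit_clock_from[OF u] in blast)
    show ?thesis unfolding K.drv_def
      using sol close[OF pb] growthf[OF pb] by (simp add: qsa_solution_def)
  qed
  have sol0: "\<Theta> 0 = \<Theta>0" if "qsa_solution \<omega> G0 f \<alpha> \<Theta>0 z0 \<Theta>" for \<alpha> \<Theta>0 z0 \<Theta>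
    using that by (simp add: qsa_solution_def)
  define \<delta> where "\<delta> = min (inverse K.R) K.dr"
  have R0: "K.R > 0" using K.R_ge(1) by simp
  have \<delta>: "\<delta> > 0" using R0 K.dr_pos by (simp add: \<delta>_def)
  have inv\<delta>: "inverse \<delta> \<ge> K.R"
  proof -
    have "\<delta> \<le> inverse K.R" by (simp add: \<delta>_def)
    then have "inverse (inverse K.R) \<le> inverse \<delta>" using \<delta> R0 by (intro le_imp_inverse_le) auto
    then show ?thesis by simp
  qed
  have part1: "\<forall>\<alpha> \<in> {0<..1::real}. \<forall>\<Theta>0. \<forall>z0 \<in> clock_Omega \<omega> \<phi>. \<forall>\<Theta>.
              qsa_solution \<omega> G0 f \<alpha> \<Theta>0 z0 \<Theta> \<longrightarrow>
              (\<forall>t\<ge>0. (\<forall>s\<in>{0..<t}. norm (\<Theta> s) > inverse \<delta>) \<longrightarrow>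
                 norm (\<Theta> t) \<le> K.bb * norm \<Theta>0 * exp (- \<alpha> * \<delta> * t))"
  proof (intro ballI allI impI)
    fix \<alpha> :: real and \<Theta>0 z0 \<Theta> t
    assume al: "\<alpha> \<in> {0<..1}" and z0: "z0 \<in> clock_Omega \<omega> \<phi>" and sol: "qsa_solution \<omega> G0 f \<alpha> \<Theta>0 z0 \<Theta>"
      and t: "t \<ge> 0" and big: "\<forall>s\<in>{0..<t}. norm (\<Theta> s) > inverse \<delta>"
    have big': "\<forall>s\<in>{0..<t}. norm (\<Theta> s) > K.R" using big inv\<delta> by force
    have "norm (\<Theta> t) \<le> K.bb * norm (\<Theta> 0) * exp (- \<alpha> * K.dr * t)"
      by (rule K.expo[OF drv[OF sol z0] _ _ t big']) (use al in auto)
    also have "\<dots> \<le> K.bb * norm (\<Theta> 0) * exp (- \<alpha> * \<delta> * t)"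
    proof -
      have "\<alpha> * \<delta> * t \<le> \<alpha> * K.dr * t" using al t \<delta> by (intro mult_right_mono mult_left_mono) (auto simp: \<delta>_def)
      then have "exp (- \<alpha> * K.dr * t) \<le> exp (- \<alpha> * \<delta> * t)" by simp
      then show ?thesis using K.bb_ge by (intro mult_left_mono) auto
    qed
    finally show "norm (\<Theta> t) \<le> K.bb * norm \<Theta>0 * exp (- \<alpha> * \<delta> * t)" using sol0[OF sol] by simp
  qed
  have part2: "\<forall>\<alpha> \<in> {0<..1::real}. \<forall>\<Theta>0. \<forall>z0 \<in> clock_Omega \<omega> \<phi>. \<forall>\<Theta>.
              qsa_solution \<omega> G0 f \<alpha> \<Theta>0 z0 \<Theta> \<longrightarrow>
              (\<exists>t0. \<forall>t\<ge>t0. norm (\<Theta> t) \<le> K.Bu)"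
  proof (intro ballI allI impI)
    fix \<alpha> :: real and \<Theta>0 z0 \<Theta>
    assume al: "\<alpha> \<in> {0<..1}" and z0: "z0 \<in> clock_Omega \<omega> \<phi>" and sol: "qsa_solution \<omega> G0 f \<alpha> \<Theta>0 z0 \<Theta>"
    show "\<exists>t0. \<forall>t\<ge>t0. norm (\<Theta> t) \<le> K.Bu"
      by (rule K.ultimate[OF drv[OF sol z0]]) (use al in auto)
  qed
  have bb0: "K.bb > 0" using K.bb_ge by simp
  have ex1: "\<exists>b>0. \<exists>\<delta>>0. \<forall>\<alpha> \<in> {0<..1::real}. \<forall>\<Theta>0. \<forall>z0 \<in> clock_Omega \<omega> \<phi>. \<forall>\<Theta>.
              qsa_solution \<omega> G0 f \<alpha> \<Theta>0 z0 \<Theta> \<longrightarrow>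
              (\<forall>t\<ge>0. (\<forall>s\<in>{0..<t}. norm (\<Theta> s) > inverse \<delta>) \<longrightarrow>
                 norm (\<Theta> t) \<le> b * norm \<Theta>0 * exp (- \<alpha> * \<delta> * t))"
    using part1 bb0 \<delta> by blast
  have ex2: "\<exists>B. \<forall>\<alpha> \<in> {0<..1::real}. \<forall>\<Theta>0. \<forall>z0 \<in> clock_Omega \<omega> \<phi>. \<forall>\<Theta>.
              qsa_solution \<omega> G0 f \<alpha> \<Theta>0 z0 \<Theta> \<longrightarrow>
              (\<exists>t0. \<forall>t\<ge>t0. norm (\<Theta> t) \<le> B)"
    using part2 by blast
  show ?thesis
  proof (rule exI[of _ "1::real"], intro conjI)
    show "(1::real) > 0" by simp
  qed (use ex1 ex2 in simp_all)
qed

end
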